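(* Let $\phi\in J_{k_1,m_1}(\mathcal O_K)$ and $\psi\in J_{k_2,m_2}(\mathcal O_K)$. Then (i) $m_1\phi\,\psi_{(2)}-m_2\psi\,\phi_{(2)}$ is a Hermitian Jacobi form of weight $k_1+k_2+1$ and index $m_1+m_2$, i.e. lies in $J_{k_1+k_2+1,m_1+m_2}(\mathcal O_K)$; (ii) $\bigl(m_1\phi\,\psi_{(1)}-m_2\psi\,\phi_{(1)}\bigr)^2+m_1\phi^2\bigl(\psi_{(1)}^2-\psi\,\psi_{(1,1)}\bigr)+m_2\psi^2\bigl(\phi_{(1)}^2-\phi\,\phi_{(1,1)}\bigr)$ lies in $J_{2(k_1+k_2+1),\,2(m_1+m_2)}(\mathcal O_K)$.
   Context: Notation: $\mathcal H$ is the upper half plane, $e(x)=e^{2\pi i x}$, $K=\mathbb Q(i)$, $\mathcal O_K=\mathbb Z[i]$, $\mathcal O_K^\times=\{\pm1,\pm i\}$, $N(x)=x\bar x$, $\mathcal O_K^\sharp=\frac i2\mathcal O_K$. For integers $k,m$, $\epsilon\in\mathcal O_K^\times$, $M=\begin{pmatrix}a&b\\c&d\end{pmatrix}\in SL(2,\mathbb Z)$ and $\phi$ a function on $\mathcal H\times\mathbb C^2$: $(\phi|_{k,m}\epsilon M)(\tau,z_1,z_2)=\epsilon^{-k}(c\tau+d)^{-k}e^{-2\pi i m c z_1z_2/(c\tau+d)}\phi\bigl(M\tau,\tfrac{\epsilon z_1}{c\tau+d},\tfrac{\bar\epsilon z_2}{c\tau+d}\bigr)$, $M\tau=\frac{a\tau+b}{c\tau+d}$;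 for $\lambda,\mu\in\mathcal O_K$, $(\phi|_m[\lambda,\mu])(\tau,z_1,z_2)=e^{2\pi i m(N(\lambda)\tau+\bar\lambda z_1+\lambda z_2)}\phi(\tau,z_1+\lambda\tau+\mu,z_2+\bar\lambda\tau+\bar\mu)$. For positive integers $k,m$, $J_{k,m}(\mathcal O_K)$ is the space of holomorphic $\phi:\mathcal H\times\mathbb C^2\to\mathbb C$ with $\phi|_{k,m}\epsilon M=\phi$ for all $\epsilon\in\mathcal O_K^\times$, $M\in SL(2,\mathbb Z)$, $\phi|_m[\lambda,\mu]=\phi$ for all $\lambda,\mu\in\mathcal O_K$, and with a Fourier expansion $\phi=\sum_{n\ge0}\sum_{r\in\mathcal O_K^\sharp,\ nm\ge N(r)}c_\phi(n,r)\,e(n\tau+rz_1+\bar rz_2)$. For a function $\phi$ on $\mathcal H\times\mathbb C^2$, $\phi_{(j)}=\partial\phi/\partial z_j$ ($j=1,2$) and $\phi_{(r,s)}=\partial^2\phi/\partial z_s\partial z_r$. *)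

theory Defs
  imports "HOL-Analysis.Analysis"
begin

definition ee :: "complex \<Rightarrow> complex" where
  "ee x = exp (2 * complex_of_real pi * \<i> * x)"

definition gauss_ints :: "complex set" where
  "gauss_ints = {of_int a + \<i> * of_int b | a b. True}"

definition gauss_units :: "complex set" where
  "gauss_units = {1, -1, \<i>, -\<i>}"

definition gauss_dual :: "complex set" where
  "gauss_dual = {(\<i> / 2) * x | x. x \<in> gauss_ints}"

definition normK :: "complex \<Rightarrow> complex" where
  "normK x = x * cnj x"

definition holo3 :: "(complex \<Rightarrow> complex \<Rightarrow> complex \<Rightarrow> complex) \<Rightarrow> bool" where
  "holo3 f \<longleftrightarrow> (\<forall>\<tau> z1 z2. Im \<tau> > 0 \<longrightarrow>
     (\<exists>A B C. ((\<lambda>(t, x, y). f t x y) has_derivative (\<lambda>(u, v, w). A * u + B * v + C * w))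
        (at (\<tau>, z1, z2))))"

definition slash :: "nat \<Rightarrow> nat \<Rightarrow> complex \<Rightarrow> int \<Rightarrow> int \<Rightarrow> int \<Rightarrow> int \<Rightarrow>
    (complex \<Rightarrow> complex \<Rightarrow> complex \<Rightarrow> complex) \<Rightarrow> complex \<Rightarrow> complex \<Rightarrow> complex \<Rightarrow> complex" where
  "slash k m \<epsilon> a b c d \<phi> \<tau> z1 z2 =
     inverse (\<epsilon> ^ k) * inverse ((of_int c * \<tau> + of_int d) ^ k)
     * exp (- 2 * complex_of_real pi * \<i> * of_nat m * of_int c * z1 * z2 / (of_int c * \<tau> + of_int d))
     * \<phi> ((of_int a * \<tau> + of_int b) / (of_int c * \<tau> + of_int d))
          (\<epsilon> * z1 / (of_int c * \<tau> + of_int d)) (cnj \<epsilon> * z2 / (of_int c * \<tau> + of_int d))"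

definition heis :: "nat \<Rightarrow> complex \<Rightarrow> complex \<Rightarrow>
    (complex \<Rightarrow> complex \<Rightarrow> complex \<Rightarrow> complex) \<Rightarrow> complex \<Rightarrow> complex \<Rightarrow> complex \<Rightarrow> complex" where
  "heis m l \<mu> \<phi> \<tau> z1 z2 =
     exp (2 * complex_of_real pi * \<i> * of_nat m * (normK l * \<tau> + cnj l * z1 + l * z2))
     * \<phi> \<tau> (z1 + l * \<tau> + \<mu>) (z2 + cnj l * \<tau> + cnj \<mu>)"

text \<open>J_{k,m}(O_K): Hermitian Jacobi forms of weight k and index m (functions are
  considered on H x C^2, i.e. for Im tau > 0).\<close>
definition HJF :: "nat \<Rightarrow> nat \<Rightarrow> (complex \<Rightarrow> complex \<Rightarrow> complex \<Rightarrow> complex) \<Rightarrow> bool" where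
  "HJF k m \<phi> \<longleftrightarrow>
     holo3 \<phi>
   \<and> (\<forall>\<epsilon>\<in>gauss_units. \<forall>a b c d. a * d - b * c = 1 \<longrightarrow>
        (\<forall>\<tau> z1 z2. Im \<tau> > 0 \<longrightarrow> slash k m \<epsilon> a b c d \<phi> \<tau> z1 z2 = \<phi> \<tau> z1 z2))
   \<and> (\<forall>l\<in>gauss_ints. \<forall>\<mu>\<in>gauss_ints.
        (\<forall>\<tau> z1 z2. Im \<tau> > 0 \<longrightarrow> heis m l \<mu> \<phi> \<tau> z1 z2 = \<phi> \<tau> z1 z2))
   \<and> (\<exists>cf :: nat \<Rightarrow> complex \<Rightarrow> complex. \<forall>\<tau> z1 z2. Im \<tau> > 0 \<longrightarrow>
        ((\<lambda>(n, r). cf n r * ee (of_nat n * \<tau> + r * z1 + cnj r * z2)) has_sum \<phi> \<tau> z1 z2)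
          {(n, r). r \<in> gauss_dual \<and> (cmod r)\<^sup>2 \<le> real (n * m)})"

definition pd1 :: "(complex \<Rightarrow> complex \<Rightarrow> complex \<Rightarrow> complex) \<Rightarrow> complex \<Rightarrow> complex \<Rightarrow> complex \<Rightarrow> complex" where
  "pd1 \<phi> \<tau> z1 z2 = deriv (\<lambda>w. \<phi> \<tau> w z2) z1"

definition pd2 :: "(complex \<Rightarrow> complex \<Rightarrow> complex \<Rightarrow> complex) \<Rightarrow> complex \<Rightarrow> complex \<Rightarrow> complex \<Rightarrow> complex" where
  "pd2 \<phi> \<tau> z1 z2 = deriv (\<lambda>w. \<phi> \<tau> z1 w) z2"

end

theory Submission
  imports Defs
begin
lemma ee_add: "ee (x + y) = ee x * ee y"
  unfolding ee_def by (simp add: distrib_left exp_add)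

lemma norm_ee: "norm (ee x) = exp (- 2 * pi * Im x)"
  unfolding ee_def by simp

lemma ee_nonzero: "ee x \<noteq> 0"
  unfolding ee_def by simp

definition fterm :: "(nat \<Rightarrow> complex \<Rightarrow> complex) \<Rightarrow> complex \<Rightarrow> complex \<Rightarrow> complex \<Rightarrow> nat \<times> complex \<Rightarrow> complex" where
  "fterm c \<tau> z1 z2 = (\<lambda>(n, r). c n r * ee (of_nat n * \<tau> + r * z1 + cnj r * z2))"

lemma fterm_shift:
  "fterm c (\<tau> + h0) (z1 + h1) (z2 + h2) x = fterm c \<tau> z1 z2 x * ee (of_nat (fst x) * h0 + snd x * h1 + cnj (snd x) * h2)"
proof -
  obtain n r where x: "x = (n, r)" by (cases x)
  have "of_nat n * (\<tau> + h0) + r * (z1 + h1) + cnj r * (z2 + h2) =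
        (of_nat n * \<tau> + r * z1 + cnj r * z2) + (of_nat n * h0 + r * h1 + cnj r * h2)"
    by (simp add: algebra_simps)
  note eq = this
  show ?thesis unfolding fterm_def x prod.case fst_conv snd_conv eq ee_add[of "of_nat n * \<tau> + r*z1 + cnj r*z2"] by simp
qed

lemma exp_rem_bound: fixes w :: complex shows "norm (exp w - 1 - w) \<le> (norm w)^2 * exp (norm w)"
proof -
  have s: "(\<lambda>n. w ^ n /\<^sub>R fact n) sums exp w" by (rule exp_converges)
  have "(\<lambda>n. w ^ (n + 2) /\<^sub>R fact (n + 2)) sums (exp w - (\<Sum>i<2. w ^ i /\<^sub>R fact i))"
    using s by (subst sums_iff_shift) simp
  then have s2: "(\<lambda>n. w ^ (n + 2) /\<^sub>R fact (n + 2)) sums (exp w - 1 - w)"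
    by (simp add: numeral_2_eq_2 diff_diff_eq)
  have s3: "(\<lambda>n. (norm w)^2 * (norm w ^ n /\<^sub>R fact n)) sums ((norm w)^2 * exp (norm w))"
    by (intro sums_mult exp_converges)
  have b: "norm (w ^ (n + 2) /\<^sub>R fact (n + 2)) \<le> (norm w)^2 * (norm w ^ n /\<^sub>R fact n)" for n
  proof -
    have "fact n \<le> (fact (n+2) :: real)" by (intro fact_mono) auto
    moreover have "(0::real) < fact n" by simp
    ultimately have "norm w ^ (n+2) / fact (n+2) \<le> norm w ^ (n+2) / fact n"
      by (intro divide_left_mono) auto
    moreover have "norm (w ^ (n + 2) /\<^sub>R fact (n + 2)) = norm w ^ (n+2) / fact (n+2)"
      by (simp add: norm_power norm_mult divide_inverse)
    moreover have "norm w ^ (n+2) / fact n = (norm w)^2 * (norm w ^ n /\<^sub>R fact n)"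
      by (simp add: power_add divide_inverse mult_ac power2_eq_square)
    ultimately show ?thesis by simp
  qed
  have "norm (exp w - 1 - w) \<le> (\<Sum>n. (norm w)^2 * (norm w ^ n /\<^sub>R fact n))"
    using s2 s3 b
    by (metis (no_types, lifting) norm_suminf_le sums_summable sums_unique)
  with s3 show ?thesis by (simp add: sums_iff)
qed

definition Kx :: "nat \<times> complex \<Rightarrow> real" where "Kx x = real (fst x) + cmod (snd x)"

definition strongsum :: "(nat \<Rightarrow> complex \<Rightarrow> complex) \<Rightarrow> (nat \<times> complex) set \<Rightarrow> bool" where
  "strongsum c S \<longleftrightarrow> (\<forall>\<tau> z1 z2. Im \<tau> > 0 \<longrightarrow>
     (\<exists>\<epsilon>>0. (\<lambda>x. norm (fterm c \<tau> z1 z2 x) * exp (\<epsilon> * Kx x)) summable_on S))"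

lemma four_exp_bound:
  fixes n t :: real and r :: complex
  assumes "n \<ge> 0" "t > 0"
  shows "exp (pi * t * (n + cmod r)) \<le>
     exp (2*pi*n*t - 2*pi*t*Im r) + exp (2*pi*n*t + 2*pi*t*Im r)
   + exp (2*pi*n*t - 2*pi*t*Re r) + exp (2*pi*n*t + 2*pi*t*Re r)"
proof -
  define M where "M = max \<bar>Re r\<bar> \<bar>Im r\<bar>"
  have "cmod r \<le> 2 * M" using cmod_le[of r] unfolding M_def by linarith
  then have a: "pi*t*cmod r \<le> pi*t*(2*M)" using assms pi_gt_zero by (intro mult_left_mono) auto
  have b: "0 \<le> pi*t*n" using assms pi_gt_zero by simp
  have "pi * t * (n + cmod r) \<le> 2*pi*n*t + 2*pi*t*M"
  proof -
    have e: "pi*t*(n+cmod r) = pi*t*n + pi*t*cmod r" "2*pi*n*t = 2*(pi*t*n)" "2*pi*t*M = pi*t*(2*M)"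
      by (simp_all add: distrib_left)
    show ?thesis unfolding e using a b by linarith
  qed
  then have le: "exp (pi * t * (n + cmod r)) \<le> exp (2*pi*n*t + 2*pi*t*M)" by simp
  have cs: "M = - Im r \<or> M = Im r \<or> M = - Re r \<or> M = Re r" unfolding M_def by linarith
  have pos: "exp (2*pi*n*t - 2*pi*t*Im r) > 0" "exp (2*pi*n*t + 2*pi*t*Im r) > 0"
     "exp (2*pi*n*t - 2*pi*t*Re r) > 0" "exp (2*pi*n*t + 2*pi*t*Re r) > 0" by auto
  from cs show ?thesis
  proof (elim disjE)
    assume "M = - Im r"
    then have "exp (2*pi*n*t + 2*pi*t*M) = exp (2*pi*n*t - 2*pi*t*Im r)" by simp
    then show ?thesis using le pos by linarith
  next
    assume "M = Im r"
    then have "exp (2*pi*n*t + 2*pi*t*M) = exp (2*pi*n*t + 2*pi*t*Im r)" by simp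
    then show ?thesis using le pos by linarith
  next
    assume "M = - Re r"
    then have "exp (2*pi*n*t + 2*pi*t*M) = exp (2*pi*n*t - 2*pi*t*Re r)" by simp
    then show ?thesis using le pos by linarith
  next
    assume "M = Re r"
    then have "exp (2*pi*n*t + 2*pi*t*M) = exp (2*pi*n*t + 2*pi*t*Re r)" by simp
    then show ?thesis using le pos by linarith
  qed
qed

lemma P_from_sum:
  assumes summ: "\<And>\<tau> z1 z2. Im \<tau> > 0 \<Longrightarrow> fterm c \<tau> z1 z2 summable_on S"
  shows "strongsum c S"
  unfolding strongsum_def
proof (intro allI impI)
  fix \<tau> z1 z2 :: complex assume tau: "Im \<tau> > 0"
  define t where "t = Im \<tau> / 2"
  have t: "t > 0" using tau unfolding t_def by simp
  define g where "g w x = norm (fterm c (\<tau> + (- (\<i> * of_real t))) (z1 + w) (z2 + 0) x)" for w x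
  have gs: "g w summable_on S" for w
  proof -
    have "Im (\<tau> + (- (\<i> * of_real t))) > 0" using tau unfolding t_def by simp
    then have "fterm c (\<tau> + (- (\<i> * of_real t))) (z1 + w) (z2 + 0) summable_on S" by (rule summ)
    then show ?thesis unfolding g_def summable_on_iff_abs_summable_on_complex .
  qed
  have gval: "g w x = norm (fterm c \<tau> z1 z2 x) * exp (2*pi*real (fst x)*t - 2*pi*Im (snd x * w))" for w x
    unfolding g_def fterm_shift norm_mult norm_ee by (simp add: algebra_simps)
  have bound: "norm (fterm c \<tau> z1 z2 x) * exp ((pi * t) * Kx x) \<le>
      g (of_real t) x + g (- of_real t) x + g (\<i> * of_real t) x + g (- (\<i> * of_real t)) x" for x
  proof -
    have "exp (pi * t * (real (fst x) + cmod (snd x))) \<le>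
     exp (2*pi*real (fst x)*t - 2*pi*t*Im (snd x)) + exp (2*pi*real (fst x)*t + 2*pi*t*Im (snd x))
   + exp (2*pi*real (fst x)*t - 2*pi*t*Re (snd x)) + exp (2*pi*real (fst x)*t + 2*pi*t*Re (snd x))"
      by (rule four_exp_bound) (use t in auto)
    then have "norm (fterm c \<tau> z1 z2 x) * exp ((pi * t) * Kx x) \<le> norm (fterm c \<tau> z1 z2 x) * (
     exp (2*pi*real (fst x)*t - 2*pi*t*Im (snd x)) + exp (2*pi*real (fst x)*t + 2*pi*t*Im (snd x))
   + exp (2*pi*real (fst x)*t - 2*pi*t*Re (snd x)) + exp (2*pi*real (fst x)*t + 2*pi*t*Re (snd x)))"
      unfolding Kx_def by (intro mult_left_mono) auto
    also have "\<dots> = g (of_real t) x + g (- of_real t) x + g (\<i> * of_real t) x + g (- (\<i> * of_real t)) x"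
      unfolding gval by (simp add: algebra_simps)
    finally show ?thesis .
  qed
  have "(\<lambda>x. g (of_real t) x + g (- of_real t) x + g (\<i> * of_real t) x + g (- (\<i> * of_real t)) x) summable_on S"
    by (intro summable_on_add gs)
  then have "(\<lambda>x. norm (fterm c \<tau> z1 z2 x) * exp ((pi * t) * Kx x)) summable_on S"
    by (rule summable_on_comparison_test) (use bound in auto)
  moreover have "pi * t > 0" using t by simp
  ultimately show "\<exists>\<epsilon>>0. (\<lambda>x. norm (fterm c \<tau> z1 z2 x) * exp (\<epsilon> * Kx x)) summable_on S" by blast
qed

definition cA :: "(nat \<Rightarrow> complex \<Rightarrow> complex) \<Rightarrow> nat \<Rightarrow> complex \<Rightarrow> complex" where
  "cA c n r = c n r * (2 * of_real pi * \<i> * of_nat n)"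
definition c1 :: "(nat \<Rightarrow> complex \<Rightarrow> complex) \<Rightarrow> nat \<Rightarrow> complex \<Rightarrow> complex" where
  "c1 c n r = c n r * (2 * of_real pi * \<i> * r)"
definition c2 :: "(nat \<Rightarrow> complex \<Rightarrow> complex) \<Rightarrow> nat \<Rightarrow> complex \<Rightarrow> complex" where
  "c2 c n r = c n r * (2 * of_real pi * \<i> * cnj r)"

lemma fterm_cA: "fterm (cA c) \<tau> z1 z2 x = fterm c \<tau> z1 z2 x * (2 * of_real pi * \<i> * of_nat (fst x))"
  by (cases x) (simp add: fterm_def cA_def mult_ac)
lemma fterm_c1: "fterm (c1 c) \<tau> z1 z2 x = fterm c \<tau> z1 z2 x * (2 * of_real pi * \<i> * snd x)"
  by (cases x) (simp add: fterm_def c1_def mult_ac)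
lemma fterm_c2: "fterm (c2 c) \<tau> z1 z2 x = fterm c \<tau> z1 z2 x * (2 * of_real pi * \<i> * cnj (snd x))"
  by (cases x) (simp add: fterm_def c2_def mult_ac)

lemma Kx_nonneg: "Kx x \<ge> 0" unfolding Kx_def by simp

lemma weight_summable:
  fixes a K :: "'a \<Rightarrow> real"
  assumes "(\<lambda>x. a x * exp (\<epsilon> * K x)) summable_on S" "\<epsilon> > 0" "\<And>x. a x \<ge> 0" "\<And>x. K x \<ge> 0"
  shows "(\<lambda>x. a x * K x * exp ((\<epsilon>/2) * K x)) summable_on S"
proof -
  have s2: "(\<lambda>x. (2/\<epsilon>) * (a x * exp (\<epsilon> * K x))) summable_on S"
    using assms(1) by (rule summable_on_cmult_right)
  have b: "a x * K x * exp ((\<epsilon>/2) * K x) \<le> (2/\<epsilon>) * (a x * exp (\<epsilon> * K x))" for x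
  proof -
    have "1 + (\<epsilon>/2) * K x \<le> exp ((\<epsilon>/2) * K x)" by (rule exp_ge_add_one_self)
    then have "K x \<le> (2/\<epsilon>) * exp ((\<epsilon>/2) * K x)" using assms(2) by (simp add: field_simps)
    then have "K x * exp ((\<epsilon>/2) * K x) \<le> (2/\<epsilon>) * exp ((\<epsilon>/2) * K x) * exp ((\<epsilon>/2) * K x)"
      by (intro mult_right_mono) auto
    also have "\<dots> = (2/\<epsilon>) * exp (\<epsilon> * K x)" by (simp add: mult.assoc exp_add[symmetric])
    finally have "a x * (K x * exp ((\<epsilon>/2) * K x)) \<le> a x * ((2/\<epsilon>) * exp (\<epsilon> * K x))"
      using assms(3) by (intro mult_left_mono) auto
    then show ?thesis by (simp add: mult_ac)
  qed
  show ?thesis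
    by (rule summable_on_comparison_test[OF s2]) (use b assms in auto)
qed

lemma strongsum_summable:
  assumes "strongsum c S" "Im \<tau> > 0"
  shows "fterm c \<tau> z1 z2 summable_on S"
proof -
  obtain \<epsilon> where e: "\<epsilon> > 0" "(\<lambda>x. norm (fterm c \<tau> z1 z2 x) * exp (\<epsilon> * Kx x)) summable_on S"
    using assms unfolding strongsum_def by blast
  have "(\<lambda>x. norm (fterm c \<tau> z1 z2 x)) summable_on S"
  proof (rule summable_on_comparison_test[OF e(2)])
    fix x
    have "1 \<le> exp (\<epsilon> * Kx x)" using e(1) Kx_nonneg[of x] by simp
    then show "norm (fterm c \<tau> z1 z2 x) \<le> norm (fterm c \<tau> z1 z2 x) * exp (\<epsilon> * Kx x)"
      by (metis mult.right_neutral mult_left_mono norm_ge_zero)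
  qed simp
  then show ?thesis using summable_on_iff_abs_summable_on_complex by blast
qed

lemma strongsum_factor:
  assumes "strongsum c S"
    and fac: "\<And>\<tau> z1 z2 x. norm (fterm c' \<tau> z1 z2 x) \<le> 2 * pi * Kx x * norm (fterm c \<tau> z1 z2 x)"
  shows "strongsum c' S"
  unfolding strongsum_def
proof (intro allI impI)
  fix \<tau> z1 z2 :: complex assume "Im \<tau> > 0"
  then obtain \<epsilon> where e: "\<epsilon> > 0" "(\<lambda>x. norm (fterm c \<tau> z1 z2 x) * exp (\<epsilon> * Kx x)) summable_on S"
    using assms unfolding strongsum_def by blast
  have "(\<lambda>x. norm (fterm c \<tau> z1 z2 x) * Kx x * exp ((\<epsilon>/2) * Kx x)) summable_on S"
    by (rule weight_summable[OF e(2) e(1)]) (auto simp: Kx_nonneg)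
  then have s: "(\<lambda>x. (2*pi) * (norm (fterm c \<tau> z1 z2 x) * Kx x * exp ((\<epsilon>/2) * Kx x))) summable_on S"
    by (rule summable_on_cmult_right)
  have "(\<lambda>x. norm (fterm c' \<tau> z1 z2 x) * exp ((\<epsilon>/2) * Kx x)) summable_on S"
  proof (rule summable_on_comparison_test[OF s])
    fix x
    have "norm (fterm c' \<tau> z1 z2 x) * exp ((\<epsilon>/2) * Kx x) \<le> (2 * pi * Kx x * norm (fterm c \<tau> z1 z2 x)) * exp ((\<epsilon>/2) * Kx x)"
      by (intro mult_right_mono fac) auto
    then show "norm (fterm c' \<tau> z1 z2 x) * exp ((\<epsilon>/2) * Kx x) \<le> (2*pi) * (norm (fterm c \<tau> z1 z2 x) * Kx x * exp ((\<epsilon>/2) * Kx x))"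
      by (simp add: mult_ac)
  qed simp
  then show "\<exists>\<epsilon>>0. (\<lambda>x. norm (fterm c' \<tau> z1 z2 x) * exp (\<epsilon> * Kx x)) summable_on S"
    using e(1) by (intro exI[of _ "\<epsilon>/2"]) auto
qed

lemma strongsum_cA: "strongsum c S \<Longrightarrow> strongsum (cA c) S"
proof (rule strongsum_factor)
  fix \<tau> z1 z2 x
  have "real (fst x) \<le> Kx x" unfolding Kx_def by simp
  then have "real (fst x) * norm (fterm c \<tau> z1 z2 x) \<le> Kx x * norm (fterm c \<tau> z1 z2 x)"
    by (rule mult_right_mono) simp
  then show "norm (fterm (cA c) \<tau> z1 z2 x) \<le> 2 * pi * Kx x * norm (fterm c \<tau> z1 z2 x)"
    by (simp add: fterm_cA norm_mult mult_ac)
qed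
lemma strongsum_c1: "strongsum c S \<Longrightarrow> strongsum (c1 c) S"
proof (rule strongsum_factor)
  fix \<tau> z1 z2 x
  have "cmod (snd x) \<le> Kx x" unfolding Kx_def by simp
  then have "cmod (snd x) * norm (fterm c \<tau> z1 z2 x) \<le> Kx x * norm (fterm c \<tau> z1 z2 x)"
    by (rule mult_right_mono) simp
  then show "norm (fterm (c1 c) \<tau> z1 z2 x) \<le> 2 * pi * Kx x * norm (fterm c \<tau> z1 z2 x)"
    by (simp add: fterm_c1 norm_mult mult_ac)
qed
lemma strongsum_c2: "strongsum c S \<Longrightarrow> strongsum (c2 c) S"
proof (rule strongsum_factor)
  fix \<tau> z1 z2 x
  have "cmod (snd x) \<le> Kx x" unfolding Kx_def by simp
  then have "cmod (snd x) * norm (fterm c \<tau> z1 z2 x) \<le> Kx x * norm (fterm c \<tau> z1 z2 x)"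
    by (rule mult_right_mono) simp
  then show "norm (fterm (c2 c) \<tau> z1 z2 x) \<le> 2 * pi * Kx x * norm (fterm c \<tau> z1 z2 x)"
    by (simp add: fterm_c2 norm_mult mult_ac)
qed

lemma has_sum_diff':
  fixes f g :: "'a \<Rightarrow> complex"
  assumes "(f has_sum a) A" "(g has_sum b) A"
  shows "((\<lambda>x. f x - g x) has_sum (a - b)) A"
proof -
  have "((\<lambda>x. - g x) has_sum (- b)) A" using assms(2) by (simp add: has_sum_uminus)
  from has_sum_add[OF assms(1) this] show ?thesis by simp
qed

lemma bl3: fixes P Q R :: complex shows "bounded_linear (\<lambda>(u, v, w). P * u + Q * v + R * w)"
proof -
  have "linear (\<lambda>(u, v, w). P * u + Q * v + R * w)"
    by (auto simp: linear_iff algebra_simps split: prod.splits)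
  then show ?thesis by (simp add: linear_conv_bounded_linear)
qed

lemma norm_L_bound:
  fixes h0 h1 h2 :: complex
  shows "norm (of_nat (fst x) * h0 + snd x * h1 + cnj (snd x) * h2) \<le> 2 * Kx x * norm (h0, h1, h2)"
proof -
  have n0: "norm h0 \<le> norm (h0,h1,h2)" by (rule norm_fst_le)
  have "norm h1 \<le> norm (h1,h2)" by (rule norm_fst_le)
  also have "\<dots> \<le> norm (h0,h1,h2)" by (rule norm_snd_le)
  finally have n1: "norm h1 \<le> norm (h0,h1,h2)" .
  have "norm h2 \<le> norm (h1,h2)" by (rule norm_snd_le)
  also have "\<dots> \<le> norm (h0,h1,h2)" by (rule norm_snd_le)
  finally have n2: "norm h2 \<le> norm (h0,h1,h2)" .
  have "norm (of_nat (fst x) * h0 + snd x * h1 + cnj (snd x) * h2)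
     \<le> real (fst x) * norm h0 + cmod (snd x) * norm h1 + cmod (snd x) * norm h2"
    by (rule order_trans[OF norm_triangle_ineq]) (auto simp: norm_mult intro!: add_mono order_trans[OF norm_triangle_ineq])
  also have "\<dots> \<le> real (fst x) * norm (h0,h1,h2) + cmod (snd x) * norm (h0,h1,h2) + cmod (snd x) * norm (h0,h1,h2)"
    by (intro add_mono mult_left_mono n0 n1 n2) auto
  also have "\<dots> \<le> 2 * Kx x * norm (h0, h1, h2)"
    unfolding Kx_def by (simp add: algebra_simps)
  finally show ?thesis .
qed

lemma series_deriv:
  assumes SS: "strongsum c S"
    and HS: "\<And>\<tau> z1 z2. Im \<tau> > 0 \<Longrightarrow> (fterm c \<tau> z1 z2 has_sum f \<tau> z1 z2) S"
    and tau: "Im \<tau> > 0"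
  shows "((\<lambda>(t, x, y). f t x y) has_derivative
           (\<lambda>(u, v, w). infsum (fterm (cA c) \<tau> z1 z2) S * u + infsum (fterm (c1 c) \<tau> z1 z2) S * v
                        + infsum (fterm (c2 c) \<tau> z1 z2) S * w)) (at (\<tau>, z1, z2))"
proof -
  define F where "F = (\<lambda>(t, x, y). f t x y)"
  define P where "P = infsum (fterm (cA c) \<tau> z1 z2) S"
  define Q where "Q = infsum (fterm (c1 c) \<tau> z1 z2) S"
  define R where "R = infsum (fterm (c2 c) \<tau> z1 z2) S"
  define D where "D = (\<lambda>(u, v, w). P * u + Q * v + R * w)"
  have hP: "(fterm (cA c) \<tau> z1 z2 has_sum P) S"
    unfolding P_def using strongsum_summable[OF strongsum_cA[OF SS] tau] by simp
  have hQ: "(fterm (c1 c) \<tau> z1 z2 has_sum Q) S"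
    unfolding Q_def using strongsum_summable[OF strongsum_c1[OF SS] tau] by simp
  have hR: "(fterm (c2 c) \<tau> z1 z2 has_sum R) S"
    unfolding R_def using strongsum_summable[OF strongsum_c2[OF SS] tau] by simp
  obtain \<epsilon> where e: "\<epsilon> > 0" "(\<lambda>x. norm (fterm c \<tau> z1 z2 x) * exp (\<epsilon> * Kx x)) summable_on S"
    using SS tau unfolding strongsum_def by blast
  define a where "a x = norm (fterm c \<tau> z1 z2 x)" for x
  have W1: "(\<lambda>x. a x * Kx x * exp ((\<epsilon>/2) * Kx x)) summable_on S"
    unfolding a_def by (rule weight_summable[OF e(2) e(1)]) (auto simp: Kx_nonneg)
  have W2: "(\<lambda>x. (a x * Kx x) * Kx x * exp ((\<epsilon>/2/2) * Kx x)) summable_on S"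
    by (rule weight_summable[OF W1]) (use e(1) in \<open>auto simp: Kx_nonneg a_def\<close>)
  define W where "W x = a x * Kx x * Kx x * exp ((\<epsilon>/2/2) * Kx x)" for x
  define MW where "MW = infsum W S"
  have hW: "(W has_sum MW) S" unfolding MW_def W_def using W2 by simp
  have bl: "bounded_linear D" unfolding D_def by (rule bl3)
  define \<delta> where "\<delta> = min (Im \<tau>) (\<epsilon> / (16 * pi))"
  have \<delta>: "\<delta> > 0" using tau e(1) unfolding \<delta>_def by simp
  have key: "norm (F ((\<tau>, z1, z2) + h) - F (\<tau>, z1, z2) - D h) \<le> 16 * pi^2 * (norm h)^2 * MW"
    if hd: "norm h < \<delta>" for h
  proof -
    obtain h0 h1 h2 where hh: "h = (h0, h1, h2)" by (cases h) auto
    have "norm h0 \<le> norm h" unfolding hh by (rule norm_fst_le)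
    then have "\<bar>Im h0\<bar> < Im \<tau>" using hd abs_Im_le_cmod[of h0] unfolding \<delta>_def by linarith
    then have tau': "Im (\<tau> + h0) > 0" by simp
    define L where "L x = of_nat (fst x) * h0 + snd x * h1 + cnj (snd x) * h2" for x
    define T where "T x = fterm c \<tau> z1 z2 x * (ee (L x) - 1 - 2 * of_real pi * \<i> * L x)" for x
    have "((\<lambda>x. fterm c (\<tau>+h0) (z1+h1) (z2+h2) x - fterm c \<tau> z1 z2 x
             - (fterm (cA c) \<tau> z1 z2 x * h0 + fterm (c1 c) \<tau> z1 z2 x * h1 + fterm (c2 c) \<tau> z1 z2 x * h2))
          has_sum (f (\<tau>+h0) (z1+h1) (z2+h2) - f \<tau> z1 z2 - (P * h0 + Q * h1 + R * h2))) S"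
      by (intro has_sum_diff' has_sum_add has_sum_cmult_left HS tau tau' hP hQ hR)
    moreover have "fterm c (\<tau>+h0) (z1+h1) (z2+h2) x - fterm c \<tau> z1 z2 x
             - (fterm (cA c) \<tau> z1 z2 x * h0 + fterm (c1 c) \<tau> z1 z2 x * h1 + fterm (c2 c) \<tau> z1 z2 x * h2)
          = T x" for x
      unfolding T_def L_def fterm_shift fterm_cA fterm_c1 fterm_c2 by (simp add: algebra_simps)
    ultimately have sT: "(T has_sum (F ((\<tau>, z1, z2) + h) - F (\<tau>, z1, z2) - D h)) S"
      unfolding hh F_def D_def by simp
    have bT: "norm (T x) \<le> 16 * pi^2 * (norm h)^2 * W x" for x
    proof -
      define w where "w = 2 * of_real pi * \<i> * L x"
      have ee_w: "ee (L x) = exp w" unfolding w_def ee_def ..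
      have nw: "norm w \<le> 4 * pi * Kx x * norm h"
      proof -
        have "norm w = 2 * pi * norm (L x)" unfolding w_def by (simp add: norm_mult)
        also have "\<dots> \<le> 2 * pi * (2 * Kx x * norm h)"
          unfolding L_def hh by (intro mult_left_mono norm_L_bound) auto
        finally show ?thesis by simp
      qed
      have nw2: "norm w \<le> (\<epsilon>/2/2) * Kx x"
      proof -
        have "norm h \<le> \<epsilon> / (16 * pi)" using hd unfolding \<delta>_def by simp
        then have "4 * pi * norm h \<le> \<epsilon>/2/2" by (simp add: field_simps)
        then have "4 * pi * norm h * Kx x \<le> (\<epsilon>/2/2) * Kx x" by (intro mult_right_mono) (auto simp: Kx_nonneg)
        then have "4 * pi * Kx x * norm h \<le> (\<epsilon>/2/2) * Kx x" by (simp add: mult_ac)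
        with nw show ?thesis by (rule order_trans)
      qed
      have "norm (T x) = a x * norm (exp w - 1 - w)" unfolding T_def a_def ee_w w_def by (simp add: norm_mult)
      also have "\<dots> \<le> a x * ((norm w)^2 * exp (norm w))"
        by (intro mult_left_mono exp_rem_bound) (simp add: a_def)
      also have "\<dots> \<le> a x * ((4 * pi * Kx x * norm h)^2 * exp ((\<epsilon>/2/2) * Kx x))"
        using nw2 by (intro mult_left_mono mult_mono power_mono nw) (auto simp: a_def)
      also have "\<dots> = 16 * pi^2 * (norm h)^2 * W x" unfolding W_def by (simp add: power2_eq_square mult_ac)
      finally show ?thesis .
    qed
    have "((\<lambda>x. 16 * pi^2 * (norm h)^2 * W x) has_sum (16 * pi^2 * (norm h)^2 * MW)) S"
      by (rule has_sum_cmult_right[OF hW])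
    from norm_infsum_le[OF sT this] bT show ?thesis by blast
  qed
  have lim: "((\<lambda>h. norm (F ((\<tau>, z1, z2) + h) - F (\<tau>, z1, z2) - D h) / norm h) \<longlongrightarrow> 0) (at 0)"
  proof (rule Lim_null_comparison)
    show "\<forall>\<^sub>F h in at 0. norm (norm (F ((\<tau>, z1, z2) + h) - F (\<tau>, z1, z2) - D h) / norm h) \<le> 16 * pi^2 * MW * norm h"
      unfolding eventually_at
    proof (intro exI[of _ \<delta>] conjI ballI impI)
      fix h :: "complex \<times> complex \<times> complex" assume "h \<noteq> 0 \<and> dist h 0 < \<delta>"
      then have h: "h \<noteq> 0" "norm h < \<delta>" by auto
      have "norm (norm (F ((\<tau>, z1, z2) + h) - F (\<tau>, z1, z2) - D h) / norm h)
          = norm (F ((\<tau>, z1, z2) + h) - F (\<tau>, z1, z2) - D h) / norm h" by simp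
      also have "\<dots> \<le> 16 * pi^2 * (norm h)^2 * MW / norm h"
        by (intro divide_right_mono key h) simp
      also have "\<dots> = 16 * pi^2 * MW * norm h" using h(1) by (simp add: power2_eq_square)
      finally show "norm (norm (F ((\<tau>, z1, z2) + h) - F (\<tau>, z1, z2) - D h) / norm h) \<le> 16 * pi^2 * MW * norm h" .
    qed (use \<delta> in auto)
    show "((\<lambda>h. 16 * pi^2 * MW * norm h) \<longlongrightarrow> 0) (at 0)"
      by (intro tendsto_eq_intros) auto
  qed
  have "(F has_derivative D) (at (\<tau>, z1, z2))" unfolding has_derivative_at using bl lim by blast
  then show ?thesis unfolding F_def D_def P_def Q_def R_def .
qed

definition Idx :: "nat \<Rightarrow> (nat \<times> complex) set" where
  "Idx m = {(n, r). r \<in> gauss_dual \<and> (cmod r)\<^sup>2 \<le> real (n * m)}"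

definition FE :: "nat \<Rightarrow> (complex \<Rightarrow> complex \<Rightarrow> complex \<Rightarrow> complex) \<Rightarrow> bool" where
  "FE m f \<longleftrightarrow> (\<exists>cf. \<forall>\<tau> z1 z2. Im \<tau> > 0 \<longrightarrow> (fterm cf \<tau> z1 z2 has_sum f \<tau> z1 z2) (Idx m))"

lemma partial_from_deriv:
  fixes P Q R :: complex
  assumes "((\<lambda>(t, x, y). f t x y) has_derivative (\<lambda>(u, v, w). P * u + Q * v + R * w)) (at (\<tau>, z1, z2))"
  shows "((\<lambda>w. f \<tau> w z2) has_field_derivative Q) (at z1)"
    and "((\<lambda>w. f \<tau> z1 w) has_field_derivative R) (at z2)"
proof -
  have d1: "((\<lambda>w. (\<tau>, w, z2)) has_derivative (\<lambda>v. (0, v, 0))) (at z1)"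
    by (auto intro!: derivative_eq_intros)
  have "((\<lambda>w. (\<lambda>(t, x, y). f t x y) (\<tau>, w, z2)) has_derivative (\<lambda>v. (\<lambda>(u, v, w). P * u + Q * v + R * w) (0, v, 0))) (at z1)"
    by (rule has_derivative_compose[OF d1]) (use assms in simp)
  then show "((\<lambda>w. f \<tau> w z2) has_field_derivative Q) (at z1)"
    unfolding has_field_derivative_def by (simp add: mult.commute[of _ Q] mult.commute[of _ R])
  have d2: "((\<lambda>w. (\<tau>, z1, w)) has_derivative (\<lambda>v. (0, 0, v))) (at z2)"
    by (auto intro!: derivative_eq_intros)
  have "((\<lambda>w. (\<lambda>(t, x, y). f t x y) (\<tau>, z1, w)) has_derivative (\<lambda>v. (\<lambda>(u, v, w). P * u + Q * v + R * w) (0, 0, v))) (at z2)"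
    by (rule has_derivative_compose[OF d2]) (use assms in simp)
  then show "((\<lambda>w. f \<tau> z1 w) has_field_derivative R) (at z2)"
    unfolding has_field_derivative_def by (simp add: mult.commute[of _ Q] mult.commute[of _ R])
qed

lemma FE_strong:
  assumes "\<And>\<tau> z1 z2. Im \<tau> > 0 \<Longrightarrow> (fterm cf \<tau> z1 z2 has_sum f \<tau> z1 z2) S"
  shows "strongsum cf S"
  by (rule P_from_sum) (use assms has_sum_imp_summable in blast)

lemma FE_core:
  assumes HS: "\<And>\<tau> z1 z2. Im \<tau> > 0 \<Longrightarrow> (fterm cf \<tau> z1 z2 has_sum f \<tau> z1 z2) S" and tau: "Im \<tau> > 0"
  shows "((\<lambda>(t, x, y). f t x y) has_derivative
           (\<lambda>(u, v, w). infsum (fterm (cA cf) \<tau> z1 z2) S * u + infsum (fterm (c1 cf) \<tau> z1 z2) S * v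
                        + infsum (fterm (c2 cf) \<tau> z1 z2) S * w)) (at (\<tau>, z1, z2))"
    and "pd1 f \<tau> z1 z2 = infsum (fterm (c1 cf) \<tau> z1 z2) S"
    and "pd2 f \<tau> z1 z2 = infsum (fterm (c2 cf) \<tau> z1 z2) S"
    and "(fterm (c1 cf) \<tau> z1 z2 has_sum pd1 f \<tau> z1 z2) S"
    and "(fterm (c2 cf) \<tau> z1 z2 has_sum pd2 f \<tau> z1 z2) S"
    and "((\<lambda>w. f \<tau> w z2) has_field_derivative pd1 f \<tau> z1 z2) (at z1)"
    and "((\<lambda>w. f \<tau> z1 w) has_field_derivative pd2 f \<tau> z1 z2) (at z2)"
proof -
  have SS: "strongsum cf S" by (rule FE_strong[OF HS])
  show D: "((\<lambda>(t, x, y). f t x y) has_derivative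
           (\<lambda>(u, v, w). infsum (fterm (cA cf) \<tau> z1 z2) S * u + infsum (fterm (c1 cf) \<tau> z1 z2) S * v
                        + infsum (fterm (c2 cf) \<tau> z1 z2) S * w)) (at (\<tau>, z1, z2))"
    by (rule series_deriv[OF SS HS tau])
  note p = partial_from_deriv[OF D]
  show e1: "pd1 f \<tau> z1 z2 = infsum (fterm (c1 cf) \<tau> z1 z2) S"
    unfolding pd1_def by (rule DERIV_imp_deriv[OF p(1)])
  show e2: "pd2 f \<tau> z1 z2 = infsum (fterm (c2 cf) \<tau> z1 z2) S"
    unfolding pd2_def by (rule DERIV_imp_deriv[OF p(2)])
  show "(fterm (c1 cf) \<tau> z1 z2 has_sum pd1 f \<tau> z1 z2) S"
    unfolding e1 using strongsum_summable[OF strongsum_c1[OF SS] tau] by simp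
  show "(fterm (c2 cf) \<tau> z1 z2 has_sum pd2 f \<tau> z1 z2) S"
    unfolding e2 using strongsum_summable[OF strongsum_c2[OF SS] tau] by simp
  show "((\<lambda>w. f \<tau> w z2) has_field_derivative pd1 f \<tau> z1 z2) (at z1)" unfolding e1 by (rule p(1))
  show "((\<lambda>w. f \<tau> z1 w) has_field_derivative pd2 f \<tau> z1 z2) (at z2)" unfolding e2 by (rule p(2))
qed

lemma FE_holo3: "FE m f \<Longrightarrow> holo3 f"
  unfolding FE_def holo3_def using FE_core(1) by blast

lemma FE_pd1: "FE m f \<Longrightarrow> FE m (pd1 f)"
  unfolding FE_def using FE_core(4) by blast

lemma FE_pd2: "FE m f \<Longrightarrow> FE m (pd2 f)"
  unfolding FE_def using FE_core(5) by blast

lemma FE_d1: "FE m f \<Longrightarrow> Im \<tau> > 0 \<Longrightarrow> ((\<lambda>w. f \<tau> w z2) has_field_derivative pd1 f \<tau> z1 z2) (at z1)"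
  unfolding FE_def using FE_core(6) by blast

lemma FE_d2: "FE m f \<Longrightarrow> Im \<tau> > 0 \<Longrightarrow> ((\<lambda>w. f \<tau> z1 w) has_field_derivative pd2 f \<tau> z1 z2) (at z2)"
  unfolding FE_def using FE_core(7) by blast

lemma has_sum_product_complex:
  fixes f g :: "_ \<Rightarrow> complex"
  assumes f: "(f has_sum a) A" and g: "(g has_sum b) B"
  shows "((\<lambda>(x, y). f x * g y) has_sum (a * b)) (A \<times> B)"
proof -
  have fa: "(\<lambda>x. norm (f x)) summable_on A"
    using has_sum_imp_summable[OF f] summable_on_iff_abs_summable_on_complex by blast
  have ga: "(\<lambda>x. norm (g x)) summable_on B"
    using has_sum_imp_summable[OF g] summable_on_iff_abs_summable_on_complex by blast
  have "(\<lambda>z. norm ((\<lambda>(x, y). f x * g y) z)) summable_on Sigma A (\<lambda>_. B)"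
  proof (rule Infinite_Sum.abs_summable_on_Sigma_iff[where f="\<lambda>(x, y). f x * g y" and A=A and B="\<lambda>_. B", THEN iffD2], intro conjI ballI)
    fix x assume "x \<in> A"
    show "(\<lambda>y. norm ((\<lambda>(x, y). f x * g y) (x, y))) summable_on B"
      using summable_on_cmult_right[OF ga, of "norm (f x)"] by (simp add: norm_mult)
  next
    have "(\<lambda>x. norm (f x) * infsum (\<lambda>y. norm (g y)) B) summable_on A"
      by (rule summable_on_cmult_left[OF fa])
    moreover have "infsum (\<lambda>y. norm ((\<lambda>(x, y). f x * g y) (x, y))) B = norm (f x) * infsum (\<lambda>y. norm (g y)) B" for x
      by (simp add: norm_mult infsum_cmult_right')
    ultimately show "(\<lambda>x. norm (infsum (\<lambda>y. norm ((\<lambda>(x, y). f x * g y) (x, y))) B)) summable_on A"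
      by (simp add: infsum_nonneg)
  qed
  then have s: "(\<lambda>(x, y). f x * g y) summable_on Sigma A (\<lambda>_. B)"
    using summable_on_iff_abs_summable_on_complex by blast
  show ?thesis
  proof (rule has_sum_SigmaI[OF _ _ s])
    fix x assume "x \<in> A"
    show "((\<lambda>y. (\<lambda>(x, y). f x * g y) (x, y)) has_sum f x * b) B"
      using has_sum_cmult_right[OF g] by simp
  next
    show "((\<lambda>x. f x * b) has_sum a * b) A" by (rule has_sum_cmult_left[OF f])
  qed
qed

lemma gauss_dual_add: "r1 \<in> gauss_dual \<Longrightarrow> r2 \<in> gauss_dual \<Longrightarrow> r1 + r2 \<in> gauss_dual"
proof -
  assume "r1 \<in> gauss_dual" "r2 \<in> gauss_dual"
  then obtain a1 b1 a2 b2 :: int where e: "r1 = (\<i>/2) * (of_int a1 + \<i> * of_int b1)" "r2 = (\<i>/2) * (of_int a2 + \<i> * of_int b2)"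
    unfolding gauss_dual_def gauss_ints_def by blast
  have "r1 + r2 = (\<i>/2) * (of_int (a1+a2) + \<i> * of_int (b1+b2))" unfolding e by (simp add: algebra_simps)
  then show ?thesis unfolding gauss_dual_def gauss_ints_def by blast
qed

lemma idx_ineq:
  fixes a b n1 n2 m1 m2 :: real
  assumes "0 \<le> a" "0 \<le> b" "0 \<le> n1" "0 \<le> n2" "0 \<le> m1" "0 \<le> m2"
    and "a^2 \<le> n1 * m1" "b^2 \<le> n2 * m2"
  shows "(a + b)^2 \<le> (n1 + n2) * (m1 + m2)"
proof -
  have "(2*a*b)^2 = 4 * (a^2 * b^2)" by (simp add: power2_eq_square)
  also have "\<dots> \<le> 4 * ((n1 * m1) * (n2 * m2))"
    using assms by (intro mult_left_mono mult_mono) auto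
  also have "\<dots> \<le> (n1 * m2 + n2 * m1)^2"
  proof -
    have "0 \<le> (n1 * m2 - n2 * m1)^2" by simp
    then show ?thesis by (simp add: power2_eq_square algebra_simps)
  qed
  finally have "2*a*b \<le> n1 * m2 + n2 * m1"
    by (rule power2_le_imp_le) (use assms in simp)
  then show ?thesis using assms by (simp add: power2_eq_square algebra_simps)
qed

lemma idx_add:
  assumes "(n1, r1) \<in> Idx m1" "(n2, r2) \<in> Idx m2"
  shows "(n1 + n2, r1 + r2) \<in> Idx (m1 + m2)"
proof -
  have d: "r1 + r2 \<in> gauss_dual" using assms gauss_dual_add unfolding Idx_def by auto
  have i1: "(cmod r1)^2 \<le> real n1 * real m1" and i2: "(cmod r2)^2 \<le> real n2 * real m2"
    using assms unfolding Idx_def by auto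
  have "(cmod (r1 + r2))^2 \<le> (cmod r1 + cmod r2)^2"
    by (rule power_mono[OF norm_triangle_ineq]) simp
  also have "\<dots> \<le> (real n1 + real n2) * (real m1 + real m2)"
    by (rule idx_ineq[OF _ _ _ _ _ _ i1 i2]) auto
  finally show ?thesis using d unfolding Idx_def by simp
qed

lemma FE_cong: "FE m f \<Longrightarrow> (\<And>\<tau> z1 z2. Im \<tau> > 0 \<Longrightarrow> f \<tau> z1 z2 = g \<tau> z1 z2) \<Longrightarrow> FE m g"
  unfolding FE_def by metis

lemma FE_idx: "FE m f \<Longrightarrow> m = m' \<Longrightarrow> FE m' f" by simp

lemma FE_cmult: "FE m f \<Longrightarrow> FE m (\<lambda>t x y. a * f t x y)"
  unfolding FE_def
proof (elim exE, intro exI[of _ "\<lambda>n r. a * _ n r"] allI impI)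
  fix cf \<tau> z1 z2 assume H: "\<forall>\<tau> z1 z2. 0 < Im \<tau> \<longrightarrow> (fterm cf \<tau> z1 z2 has_sum f \<tau> z1 z2) (Idx m)" and "Im \<tau> > 0"
  then have "((\<lambda>x. a * fterm cf \<tau> z1 z2 x) has_sum a * f \<tau> z1 z2) (Idx m)"
    by (intro has_sum_cmult_right) auto
  moreover have "fterm (\<lambda>n r. a * cf n r) \<tau> z1 z2 = (\<lambda>x. a * fterm cf \<tau> z1 z2 x)"
    by (rule ext, case_tac x) (simp add: fterm_def)
  ultimately show "(fterm (\<lambda>n r. a * cf n r) \<tau> z1 z2 has_sum a * f \<tau> z1 z2) (Idx m)" by simp
qed

lemma FE_add: "FE m f \<Longrightarrow> FE m g \<Longrightarrow> FE m (\<lambda>t x y. f t x y + g t x y)"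
  unfolding FE_def
proof (elim exE, intro exI[of _ "\<lambda>n r. _ n r + _ n r"] allI impI)
  fix cf cg \<tau> z1 z2 assume H: "\<forall>\<tau> z1 z2. 0 < Im \<tau> \<longrightarrow> (fterm cf \<tau> z1 z2 has_sum f \<tau> z1 z2) (Idx m)"
    and G: "\<forall>\<tau> z1 z2. 0 < Im \<tau> \<longrightarrow> (fterm cg \<tau> z1 z2 has_sum g \<tau> z1 z2) (Idx m)" and "Im \<tau> > 0"
  then have "((\<lambda>x. fterm cf \<tau> z1 z2 x + fterm cg \<tau> z1 z2 x) has_sum f \<tau> z1 z2 + g \<tau> z1 z2) (Idx m)"
    by (intro has_sum_add) auto
  moreover have "fterm (\<lambda>n r. cf n r + cg n r) \<tau> z1 z2 = (\<lambda>x. fterm cf \<tau> z1 z2 x + fterm cg \<tau> z1 z2 x)"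
    by (rule ext, case_tac x) (simp add: fterm_def algebra_simps)
  ultimately show "(fterm (\<lambda>n r. cf n r + cg n r) \<tau> z1 z2 has_sum f \<tau> z1 z2 + g \<tau> z1 z2) (Idx m)" by simp
qed

lemma FE_diff: "FE m f \<Longrightarrow> FE m g \<Longrightarrow> FE m (\<lambda>t x y. f t x y - g t x y)"
proof -
  assume "FE m f" "FE m g"
  then have "FE m (\<lambda>t x y. f t x y + (\<lambda>t x y. (-1) * g t x y) t x y)" by (intro FE_add FE_cmult)
  then show ?thesis by (rule FE_cong) simp
qed

lemma FE_mult:
  assumes "FE m1 f" "FE m2 g"
  shows "FE (m1 + m2) (\<lambda>t x y. f t x y * g t x y)"
proof -
  obtain cf1 where H1: "\<And>\<tau> z1 z2. Im \<tau> > 0 \<Longrightarrow> (fterm cf1 \<tau> z1 z2 has_sum f \<tau> z1 z2) (Idx m1)"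
    using assms(1) unfolding FE_def by blast
  obtain cf2 where H2: "\<And>\<tau> z1 z2. Im \<tau> > 0 \<Longrightarrow> (fterm cf2 \<tau> z1 z2 has_sum g \<tau> z1 z2) (Idx m2)"
    using assms(2) unfolding FE_def by blast
  define X where "X = Idx m1 \<times> Idx m2"
  define pr :: "(nat \<times> complex) \<times> (nat \<times> complex) \<Rightarrow> nat \<times> complex"
    where "pr z = (fst (fst z) + fst (snd z), snd (fst z) + snd (snd z))" for z
  define fib where "fib q = {z \<in> X. pr z = q}" for q
  define cc where "cc z = cf1 (fst (fst z)) (snd (fst z)) * cf2 (fst (snd z)) (snd (snd z))" for z
  define cf where "cf n r = infsum cc (fib (n, r))" for n r
  have prX: "pr ` X \<subseteq> Idx (m1 + m2)"
  proof
    fix q assume "q \<in> pr ` X"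
    then obtain n1 r1 n2 r2 where "(n1, r1) \<in> Idx m1" "(n2, r2) \<in> Idx m2" "q = (n1 + n2, r1 + r2)"
      unfolding X_def pr_def by auto
    then show "q \<in> Idx (m1 + m2)" using idx_add by simp
  qed
  have "(fterm cf \<tau> z1 z2 has_sum f \<tau> z1 z2 * g \<tau> z1 z2) (Idx (m1 + m2))" if tau: "Im \<tau> > 0" for \<tau> z1 z2
  proof -
    define E where "E q = ee (of_nat (fst q) * \<tau> + snd q * z1 + cnj (snd q) * z2)" for q
    have P: "((\<lambda>(x, y). fterm cf1 \<tau> z1 z2 x * fterm cf2 \<tau> z1 z2 y) has_sum f \<tau> z1 z2 * g \<tau> z1 z2) X"
      unfolding X_def by (rule has_sum_product_complex[OF H1[OF tau] H2[OF tau]])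
    have spl: "(\<lambda>(x, y). fterm cf1 \<tau> z1 z2 x * fterm cf2 \<tau> z1 z2 y) z = cc z * E (pr z)" for z
    proof -
      obtain n1 r1 n2 r2 where z: "z = ((n1, r1), (n2, r2))" by (metis prod.collapse)
      have "of_nat (n1 + n2) * \<tau> + (r1 + r2) * z1 + cnj (r1 + r2) * z2 =
            (of_nat n1 * \<tau> + r1 * z1 + cnj r1 * z2) + (of_nat n2 * \<tau> + r2 * z1 + cnj r2 * z2)"
        by (simp add: algebra_simps)
      then have "E (pr z) = ee (of_nat n1 * \<tau> + r1 * z1 + cnj r1 * z2) * ee (of_nat n2 * \<tau> + r2 * z1 + cnj r2 * z2)"
        unfolding E_def pr_def z by (simp add: ee_add[symmetric])
      then show ?thesis unfolding z cc_def fterm_def by simp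
    qed
    have P': "((\<lambda>z. cc z * E (pr z)) has_sum f \<tau> z1 z2 * g \<tau> z1 z2) X"
      using P unfolding spl .
    have bij: "bij_betw (\<lambda>z. (pr z, z)) X (Sigma (pr ` X) fib)"
      unfolding bij_betw_def
    proof
      show "inj_on (\<lambda>z. (pr z, z)) X" by (auto simp: inj_on_def)
      show "(\<lambda>z. (pr z, z)) ` X = Sigma (pr ` X) fib"
      proof (rule set_eqI)
        fix p :: "(nat \<times> complex) \<times> (nat \<times> complex) \<times> (nat \<times> complex)"
        obtain q z where p: "p = (q, z)" by (cases p)
        show "p \<in> (\<lambda>z. (pr z, z)) ` X \<longleftrightarrow> p \<in> Sigma (pr ` X) fib"
          unfolding p fib_def by (auto simp: image_iff)
      qed
    qed
    have S: "((\<lambda>(q, z). cc z * E q) has_sum f \<tau> z1 z2 * g \<tau> z1 z2) (Sigma (pr ` X) fib)"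
      using P' has_sum_reindex_bij_betw[OF bij, where f="\<lambda>(q, z). cc z * E q"] by simp
    have fibsum: "((\<lambda>z. cc z * E q) has_sum (infsum cc (fib q) * E q)) (fib q)" if q: "q \<in> pr ` X" for q
    proof -
      have "(\<lambda>z. cc z * E (pr z)) summable_on fib q"
        by (rule summable_on_subset_banach[OF has_sum_imp_summable[OF P']]) (auto simp: fib_def)
      then have "(\<lambda>z. cc z * E q) summable_on fib q"
        by (rule summable_on_cong[THEN iffD1, rotated]) (auto simp: fib_def)
      then have "(\<lambda>z. cc z * E q * inverse (E q)) summable_on fib q"
        by (rule summable_on_cmult_left)
      moreover have "E q \<noteq> 0" unfolding E_def by (rule ee_nonzero)
      moreover have "(\<lambda>z. cc z * E q * inverse (E q)) = cc" using \<open>E q \<noteq> 0\<close> by (simp add: fun_eq_iff)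
      ultimately have "cc summable_on fib q" by simp
      then show ?thesis by (intro has_sum_cmult_left) simp
    qed
    have S2: "((\<lambda>q. infsum cc (fib q) * E q) has_sum f \<tau> z1 z2 * g \<tau> z1 z2) (pr ` X)"
      using has_sum_Sigma'[OF S] fibsum by simp
    have ft: "fterm cf \<tau> z1 z2 q = infsum cc (fib q) * E q" for q
      by (cases q) (simp add: fterm_def cf_def E_def)
    show ?thesis
    proof (rule has_sum_cong_neutral[THEN iffD1, OF _ _ _ S2])
      fix q assume "q \<in> Idx (m1 + m2) - pr ` X"
      then have "fib q = {}" unfolding fib_def by auto
      then show "fterm cf \<tau> z1 z2 q = 0" unfolding ft by simp
    next
      fix q assume "q \<in> pr ` X - Idx (m1 + m2)"
      then show "infsum cc (fib q) * E q = 0" using prX by auto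
    next
      fix q assume "q \<in> pr ` X \<inter> Idx (m1 + m2)"
      show "infsum cc (fib q) * E q = fterm cf \<tau> z1 z2 q" unfolding ft ..
    qed
  qed
  then show ?thesis unfolding FE_def by blast
qed

lemma deriv_lemma:
  fixes F :: "complex \<Rightarrow> complex" and mm C k0 k1 :: complex
  assumes "(F has_field_derivative F') (at z)"
  shows "((\<lambda>w. C * exp (mm * (k0 + k1 * w)) * F w) has_field_derivative
           C * exp (mm * (k0 + k1 * z)) * (mm * k1 * F z + F')) (at z)"
proof -
  have e: "((\<lambda>w. mm * (k0 + k1 * w)) has_field_derivative mm * k1) (at z)"
    using DERIV_cmult[OF DERIV_add[OF DERIV_const DERIV_cmult[OF DERIV_ident]], of mm k0 k1 z] by simp
  have ex: "((\<lambda>w. exp (mm * (k0 + k1 * w))) has_field_derivative exp (mm * (k0 + k1 * z)) * (mm * k1)) (at z)"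
    by (rule DERIV_chain2[OF DERIV_exp e])
  have "((\<lambda>w. C * exp (mm * (k0 + k1 * w)) * F w) has_field_derivative
        C * (exp (mm * (k0 + k1 * z)) * (mm * k1)) * F z + F' * (C * exp (mm * (k0 + k1 * z)))) (at z)"
    by (rule DERIV_mult[OF DERIV_cmult[OF ex] assms])
  moreover have "C * (exp (mm * (k0 + k1 * z)) * (mm * k1)) * F z + F' * (C * exp (mm * (k0 + k1 * z)))
      = C * exp (mm * (k0 + k1 * z)) * (mm * k1 * F z + F')" by (simp add: algebra_simps)
  ultimately show ?thesis by simp
qed

lemma trans_derivs:
  fixes \<phi> :: "complex \<Rightarrow> complex \<Rightarrow> complex \<Rightarrow> complex" and mm :: complex
  assumes d1: "\<And>t z1 z2. t \<in> {\<tau>, \<tau>'} \<Longrightarrow> ((\<lambda>w. \<phi> t w z2) has_field_derivative pd1 \<phi> t z1 z2) (at z1)"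
    and d2: "\<And>t z1 z2. t \<in> {\<tau>, \<tau>'} \<Longrightarrow> ((\<lambda>w. \<phi> t z1 w) has_field_derivative pd2 \<phi> t z1 z2) (at z2)"
    and d11: "\<And>t z1 z2. t \<in> {\<tau>, \<tau>'} \<Longrightarrow> ((\<lambda>w. pd1 \<phi> t w z2) has_field_derivative pd1 (pd1 \<phi>) t z1 z2) (at z1)"
    and T: "\<And>z1 z2. \<phi> \<tau>' (p1 * z1 + q1) (p2 * z2 + q2) = C * exp (mm * (e0 + e1 * z1 + e2 * z2 + e12 * z1 * z2)) * \<phi> \<tau> z1 z2"
  shows "pd2 \<phi> \<tau>' (p1 * z1 + q1) (p2 * z2 + q2) * p2 =
           C * exp (mm * (e0 + e1 * z1 + e2 * z2 + e12 * z1 * z2)) * (mm * (e2 + e12 * z1) * \<phi> \<tau> z1 z2 + pd2 \<phi> \<tau> z1 z2)"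
    and T1: "pd1 \<phi> \<tau>' (p1 * z1 + q1) (p2 * z2 + q2) * p1 =
           C * exp (mm * (e0 + e1 * z1 + e2 * z2 + e12 * z1 * z2)) * (mm * (e1 + e12 * z2) * \<phi> \<tau> z1 z2 + pd1 \<phi> \<tau> z1 z2)"
    and "pd1 (pd1 \<phi>) \<tau>' (p1 * z1 + q1) (p2 * z2 + q2) * p1 * p1 =
           C * exp (mm * (e0 + e1 * z1 + e2 * z2 + e12 * z1 * z2)) *
             ((mm * (e1 + e12 * z2))^2 * \<phi> \<tau> z1 z2 + 2 * (mm * (e1 + e12 * z2)) * pd1 \<phi> \<tau> z1 z2 + pd1 (pd1 \<phi>) \<tau> z1 z2)"
proof -
  have lin: "\<And>p q w0. ((\<lambda>w::complex. p * w + q) has_field_derivative p) (at w0)"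
    using DERIV_add[OF DERIV_cmult[OF DERIV_ident] DERIV_const] by simp
  have E2: "e0 + e1 * z1 + e2 * w + e12 * z1 * w = (e0 + e1 * z1) + (e2 + e12 * z1) * w" for z1 w :: complex
    by (simp add: algebra_simps)
  have E1: "e0 + e1 * w + e2 * z2 + e12 * w * z2 = (e0 + e2 * z2) + (e1 + e12 * z2) * w" for z2 w :: complex
    by (simp add: algebra_simps)
  have T2g: "pd2 \<phi> \<tau>' (p1 * z1 + q1) (p2 * z2 + q2) * p2 =
           C * exp (mm * (e0 + e1 * z1 + e2 * z2 + e12 * z1 * z2)) * (mm * (e2 + e12 * z1) * \<phi> \<tau> z1 z2 + pd2 \<phi> \<tau> z1 z2)" for z1 z2
  proof -
    have L: "((\<lambda>w. \<phi> \<tau>' (p1 * z1 + q1) (p2 * w + q2)) has_field_derivative pd2 \<phi> \<tau>' (p1 * z1 + q1) (p2 * z2 + q2) * p2) (at z2)"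
      by (rule DERIV_chain2[OF d2 lin]) simp
    have R: "((\<lambda>w. C * exp (mm * ((e0 + e1 * z1) + (e2 + e12 * z1) * w)) * \<phi> \<tau> z1 w) has_field_derivative
        C * exp (mm * ((e0 + e1 * z1) + (e2 + e12 * z1) * z2)) * (mm * (e2 + e12 * z1) * \<phi> \<tau> z1 z2 + pd2 \<phi> \<tau> z1 z2)) (at z2)"
      by (rule deriv_lemma[OF d2]) simp
    have "(\<lambda>w. \<phi> \<tau>' (p1 * z1 + q1) (p2 * w + q2)) = (\<lambda>w. C * exp (mm * ((e0 + e1 * z1) + (e2 + e12 * z1) * w)) * \<phi> \<tau> z1 w)"
      by (rule ext) (subst T, subst E2, rule refl)
    note feq = this
    have "pd2 \<phi> \<tau>' (p1 * z1 + q1) (p2 * z2 + q2) * p2 =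
        C * exp (mm * ((e0 + e1 * z1) + (e2 + e12 * z1) * z2)) * (mm * (e2 + e12 * z1) * \<phi> \<tau> z1 z2 + pd2 \<phi> \<tau> z1 z2)"
      by (rule DERIV_unique[OF L[unfolded feq] R])
    then show ?thesis unfolding E2 .
  qed
  then show "pd2 \<phi> \<tau>' (p1 * z1 + q1) (p2 * z2 + q2) * p2 =
           C * exp (mm * (e0 + e1 * z1 + e2 * z2 + e12 * z1 * z2)) * (mm * (e2 + e12 * z1) * \<phi> \<tau> z1 z2 + pd2 \<phi> \<tau> z1 z2)" .
  have T1g: "pd1 \<phi> \<tau>' (p1 * z1 + q1) (p2 * z2 + q2) * p1 =
           C * exp (mm * ((e0 + e2 * z2) + (e1 + e12 * z2) * z1)) * (mm * (e1 + e12 * z2) * \<phi> \<tau> z1 z2 + pd1 \<phi> \<tau> z1 z2)" for z1 z2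
  proof -
    have L: "((\<lambda>w. \<phi> \<tau>' (p1 * w + q1) (p2 * z2 + q2)) has_field_derivative pd1 \<phi> \<tau>' (p1 * z1 + q1) (p2 * z2 + q2) * p1) (at z1)"
      by (rule DERIV_chain2[OF d1 lin]) simp
    have R: "((\<lambda>w. C * exp (mm * ((e0 + e2 * z2) + (e1 + e12 * z2) * w)) * \<phi> \<tau> w z2) has_field_derivative
        C * exp (mm * ((e0 + e2 * z2) + (e1 + e12 * z2) * z1)) * (mm * (e1 + e12 * z2) * \<phi> \<tau> z1 z2 + pd1 \<phi> \<tau> z1 z2)) (at z1)"
      by (rule deriv_lemma[OF d1]) simp
    have "(\<lambda>w. \<phi> \<tau>' (p1 * w + q1) (p2 * z2 + q2)) = (\<lambda>w. C * exp (mm * ((e0 + e2 * z2) + (e1 + e12 * z2) * w)) * \<phi> \<tau> w z2)"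
      by (rule ext) (subst T, subst E1, rule refl)
    note feq = this
    show ?thesis by (rule DERIV_unique[OF L[unfolded feq] R])
  qed
  then show "pd1 \<phi> \<tau>' (p1 * z1 + q1) (p2 * z2 + q2) * p1 =
           C * exp (mm * (e0 + e1 * z1 + e2 * z2 + e12 * z1 * z2)) * (mm * (e1 + e12 * z2) * \<phi> \<tau> z1 z2 + pd1 \<phi> \<tau> z1 z2)"
    unfolding E1 .
  have L: "((\<lambda>w. pd1 \<phi> \<tau>' (p1 * w + q1) (p2 * z2 + q2) * p1) has_field_derivative pd1 (pd1 \<phi>) \<tau>' (p1 * z1 + q1) (p2 * z2 + q2) * p1 * p1) (at z1)"
    by (rule DERIV_cmult_right, rule DERIV_chain2[OF d11 lin]) simp
  define a where "a = mm * (e1 + e12 * z2)"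
  have G: "((\<lambda>w. a * \<phi> \<tau> w z2 + pd1 \<phi> \<tau> w z2) has_field_derivative a * pd1 \<phi> \<tau> z1 z2 + pd1 (pd1 \<phi>) \<tau> z1 z2) (at z1)"
    by (rule DERIV_add[OF DERIV_cmult[OF d1] d11]) simp_all
  have R: "((\<lambda>w. C * exp (mm * ((e0 + e2 * z2) + (e1 + e12 * z2) * w)) * (a * \<phi> \<tau> w z2 + pd1 \<phi> \<tau> w z2)) has_field_derivative
        C * exp (mm * ((e0 + e2 * z2) + (e1 + e12 * z2) * z1)) * (mm * (e1 + e12 * z2) * (a * \<phi> \<tau> z1 z2 + pd1 \<phi> \<tau> z1 z2) + (a * pd1 \<phi> \<tau> z1 z2 + pd1 (pd1 \<phi>) \<tau> z1 z2))) (at z1)"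
    by (rule deriv_lemma[OF G])
  have "(\<lambda>w. pd1 \<phi> \<tau>' (p1 * w + q1) (p2 * z2 + q2) * p1) = (\<lambda>w. C * exp (mm * ((e0 + e2 * z2) + (e1 + e12 * z2) * w)) * (a * \<phi> \<tau> w z2 + pd1 \<phi> \<tau> w z2))"
    by (rule ext) (subst T1g, simp add: a_def)
  note feq = this
  have "pd1 (pd1 \<phi>) \<tau>' (p1 * z1 + q1) (p2 * z2 + q2) * p1 * p1 =
        C * exp (mm * ((e0 + e2 * z2) + (e1 + e12 * z2) * z1)) * (mm * (e1 + e12 * z2) * (a * \<phi> \<tau> z1 z2 + pd1 \<phi> \<tau> z1 z2) + (a * pd1 \<phi> \<tau> z1 z2 + pd1 (pd1 \<phi>) \<tau> z1 z2))"
    by (rule DERIV_unique[OF L[unfolded feq] R])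
  also have "\<dots> = C * exp (mm * (e0 + e1 * z1 + e2 * z2 + e12 * z1 * z2)) *
             ((mm * (e1 + e12 * z2))^2 * \<phi> \<tau> z1 z2 + 2 * (mm * (e1 + e12 * z2)) * pd1 \<phi> \<tau> z1 z2 + pd1 (pd1 \<phi>) \<tau> z1 z2)"
  proof -
    have "mm * (e1 + e12 * z2) * (a * \<phi> \<tau> z1 z2 + pd1 \<phi> \<tau> z1 z2) + (a * pd1 \<phi> \<tau> z1 z2 + pd1 (pd1 \<phi>) \<tau> z1 z2)
       = (mm * (e1 + e12 * z2))^2 * \<phi> \<tau> z1 z2 + 2 * (mm * (e1 + e12 * z2)) * pd1 \<phi> \<tau> z1 z2 + pd1 (pd1 \<phi>) \<tau> z1 z2"
      unfolding a_def by (simp add: algebra_simps power2_eq_square)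
    then show ?thesis unfolding E1[symmetric] by simp
  qed
  finally show "pd1 (pd1 \<phi>) \<tau>' (p1 * z1 + q1) (p2 * z2 + q2) * p1 * p1 =
           C * exp (mm * (e0 + e1 * z1 + e2 * z2 + e12 * z1 * z2)) *
             ((mm * (e1 + e12 * z2))^2 * \<phi> \<tau> z1 z2 + 2 * (mm * (e1 + e12 * z2)) * pd1 \<phi> \<tau> z1 z2 + pd1 (pd1 \<phi>) \<tau> z1 z2)" .
qed

lemma unit_facts:
  assumes "\<epsilon> \<in> gauss_units"
  shows "\<epsilon> \<noteq> 0" "\<epsilon> * cnj \<epsilon> = 1" "\<epsilon> ^ 4 = 1" "cnj \<epsilon> \<noteq> 0"
  using assms unfolding gauss_units_def by (auto simp: power4_eq_xxxx)

lemma exp_cancel: fixes x y :: complex shows "x + y = 0 \<Longrightarrow> exp x * exp y = 1"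
  by (metis exp_add exp_zero)

lemma mobius:
  fixes a b c d :: int
  assumes det: "a * d - b * c = 1" and tau: "Im \<tau> > 0"
  shows "of_int c * \<tau> + of_int d \<noteq> 0" "Im ((of_int a * \<tau> + of_int b) / (of_int c * \<tau> + of_int d)) > 0"
proof -
  show J: "of_int c * \<tau> + of_int d \<noteq> 0"
  proof
    assume "of_int c * \<tau> + of_int d = 0"
    then have i: "Im (of_int c * \<tau> + of_int d) = 0" and r: "Re (of_int c * \<tau> + of_int d) = 0" by simp_all
    from i have "of_int c * Im \<tau> = 0" by simp
    then have "c = 0" using tau by simp
    then have "d = 0" using r by simp
    with \<open>c = 0\<close> det show False by simp
  qed
  have num: "Im (of_int a * \<tau> + of_int b) * Re (of_int c * \<tau> + of_int d) - Re (of_int a * \<tau> + of_int b) * Im (of_int c * \<tau> + of_int d)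
     = of_int (a * d - b * c) * Im \<tau>" by (simp add: algebra_simps)
  have den: "(Re (of_int c * \<tau> + of_int d))\<^sup>2 + (Im (of_int c * \<tau> + of_int d))\<^sup>2 > 0"
    using J by (metis complex_eq_iff sum_power2_gt_zero_iff zero_complex.sel(1) zero_complex.sel(2))
  have "Im ((of_int a * \<tau> + of_int b) / (of_int c * \<tau> + of_int d)) = Im \<tau> / ((Re (of_int c * \<tau> + of_int d))\<^sup>2 + (Im (of_int c * \<tau> + of_int d))\<^sup>2)"
    unfolding Im_divide num det by simp
  then show "Im ((of_int a * \<tau> + of_int b) / (of_int c * \<tau> + of_int d)) > 0"
    using tau den by simp
qed

lemma combo_i:
  fixes X Y X2 Y2 C1 C2 x1 x2 f g f2 g2 m1 m2 a u :: complex
  assumes "X = C1 * x1 * f" "Y = C2 * x2 * g"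
    "X2 = C1 * x1 * (m1 * a * f + f2) * u" "Y2 = C2 * x2 * (m2 * a * g + g2) * u"
  shows "m1 * X * Y2 - m2 * Y * X2 = C1 * C2 * x1 * x2 * u * (m1 * f * g2 - m2 * g * f2)"
  unfolding assms by algebra

lemma combo_ii:
  fixes X Y X1 Y1 X11 Y11 C1 C2 x1 x2 f g f1 g1 f11 g11 m1 m2 a u :: complex
  assumes "X = C1 * x1 * f" "Y = C2 * x2 * g"
    "X1 = C1 * x1 * (m1 * a * f + f1) * u" "Y1 = C2 * x2 * (m2 * a * g + g1) * u"
    "X11 = C1 * x1 * ((m1 * a)^2 * f + 2 * (m1 * a) * f1 + f11) * u^2"
    "Y11 = C2 * x2 * ((m2 * a)^2 * g + 2 * (m2 * a) * g1 + g11) * u^2"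
  shows "(m1 * X * Y1 - m2 * Y * X1)^2 + m1 * X^2 * (Y1^2 - Y * Y11) + m2 * Y^2 * (X1^2 - X * X11)
       = (C1 * C2 * x1 * x2 * u)^2 * ((m1 * f * g1 - m2 * g * f1)^2 + m1 * f^2 * (g1^2 - g * g11) + m2 * g^2 * (f1^2 - f * f11))"
  unfolding assms by algebra

lemma trans_combo:
  fixes \<phi> \<psi> :: "complex \<Rightarrow> complex \<Rightarrow> complex \<Rightarrow> complex" and m1 m2 :: nat
  assumes d1: "\<And>t z1 z2. t \<in> {\<tau>, \<tau>'} \<Longrightarrow> ((\<lambda>w. \<phi> t w z2) has_field_derivative pd1 \<phi> t z1 z2) (at z1)"
    and d2: "\<And>t z1 z2. t \<in> {\<tau>, \<tau>'} \<Longrightarrow> ((\<lambda>w. \<phi> t z1 w) has_field_derivative pd2 \<phi> t z1 z2) (at z2)"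
    and d11: "\<And>t z1 z2. t \<in> {\<tau>, \<tau>'} \<Longrightarrow> ((\<lambda>w. pd1 \<phi> t w z2) has_field_derivative pd1 (pd1 \<phi>) t z1 z2) (at z1)"
    and g1: "\<And>t z1 z2. t \<in> {\<tau>, \<tau>'} \<Longrightarrow> ((\<lambda>w. \<psi> t w z2) has_field_derivative pd1 \<psi> t z1 z2) (at z1)"
    and g2: "\<And>t z1 z2. t \<in> {\<tau>, \<tau>'} \<Longrightarrow> ((\<lambda>w. \<psi> t z1 w) has_field_derivative pd2 \<psi> t z1 z2) (at z2)"
    and g11: "\<And>t z1 z2. t \<in> {\<tau>, \<tau>'} \<Longrightarrow> ((\<lambda>w. pd1 \<psi> t w z2) has_field_derivative pd1 (pd1 \<psi>) t z1 z2) (at z1)"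
    and T\<phi>: "\<And>z1 z2. \<phi> \<tau>' (p1 * z1 + q1) (p2 * z2 + q2) = C1 * exp (of_nat m1 * (e0 + e1 * z1 + e2 * z2 + e12 * z1 * z2)) * \<phi> \<tau> z1 z2"
    and T\<psi>: "\<And>z1 z2. \<psi> \<tau>' (p1 * z1 + q1) (p2 * z2 + q2) = C2 * exp (of_nat m2 * (e0 + e1 * z1 + e2 * z2 + e12 * z1 * z2)) * \<psi> \<tau> z1 z2"
    and p1: "p1 \<noteq> 0" and p2: "p2 \<noteq> 0"
  shows "of_nat m1 * \<phi> \<tau>' (p1 * z1 + q1) (p2 * z2 + q2) * pd2 \<psi> \<tau>' (p1 * z1 + q1) (p2 * z2 + q2)
         - of_nat m2 * \<psi> \<tau>' (p1 * z1 + q1) (p2 * z2 + q2) * pd2 \<phi> \<tau>' (p1 * z1 + q1) (p2 * z2 + q2)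
       = C1 * C2 * exp (of_nat m1 * (e0 + e1 * z1 + e2 * z2 + e12 * z1 * z2)) * exp (of_nat m2 * (e0 + e1 * z1 + e2 * z2 + e12 * z1 * z2))
          * inverse p2 * (of_nat m1 * \<phi> \<tau> z1 z2 * pd2 \<psi> \<tau> z1 z2 - of_nat m2 * \<psi> \<tau> z1 z2 * pd2 \<phi> \<tau> z1 z2)"
    and "(of_nat m1 * \<phi> \<tau>' (p1 * z1 + q1) (p2 * z2 + q2) * pd1 \<psi> \<tau>' (p1 * z1 + q1) (p2 * z2 + q2)
          - of_nat m2 * \<psi> \<tau>' (p1 * z1 + q1) (p2 * z2 + q2) * pd1 \<phi> \<tau>' (p1 * z1 + q1) (p2 * z2 + q2))\<^sup>2
       + of_nat m1 * (\<phi> \<tau>' (p1 * z1 + q1) (p2 * z2 + q2))\<^sup>2 * ((pd1 \<psi> \<tau>' (p1 * z1 + q1) (p2 * z2 + q2))\<^sup>2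
          - \<psi> \<tau>' (p1 * z1 + q1) (p2 * z2 + q2) * pd1 (pd1 \<psi>) \<tau>' (p1 * z1 + q1) (p2 * z2 + q2))
       + of_nat m2 * (\<psi> \<tau>' (p1 * z1 + q1) (p2 * z2 + q2))\<^sup>2 * ((pd1 \<phi> \<tau>' (p1 * z1 + q1) (p2 * z2 + q2))\<^sup>2
          - \<phi> \<tau>' (p1 * z1 + q1) (p2 * z2 + q2) * pd1 (pd1 \<phi>) \<tau>' (p1 * z1 + q1) (p2 * z2 + q2))
       = (C1 * C2 * exp (of_nat m1 * (e0 + e1 * z1 + e2 * z2 + e12 * z1 * z2)) * exp (of_nat m2 * (e0 + e1 * z1 + e2 * z2 + e12 * z1 * z2))
          * inverse p1)\<^sup>2 *
         ((of_nat m1 * \<phi> \<tau> z1 z2 * pd1 \<psi> \<tau> z1 z2 - of_nat m2 * \<psi> \<tau> z1 z2 * pd1 \<phi> \<tau> z1 z2)\<^sup>2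
          + of_nat m1 * (\<phi> \<tau> z1 z2)\<^sup>2 * ((pd1 \<psi> \<tau> z1 z2)\<^sup>2 - \<psi> \<tau> z1 z2 * pd1 (pd1 \<psi>) \<tau> z1 z2)
          + of_nat m2 * (\<psi> \<tau> z1 z2)\<^sup>2 * ((pd1 \<phi> \<tau> z1 z2)\<^sup>2 - \<phi> \<tau> z1 z2 * pd1 (pd1 \<phi>) \<tau> z1 z2))"
proof -
  note A = trans_derivs[where \<phi>=\<phi> and mm="of_nat m1", OF d1 d2 d11 T\<phi>, of z1 z2]
  note B = trans_derivs[where \<phi>=\<psi> and mm="of_nat m2", OF g1 g2 g11 T\<psi>, of z1 z2]
  have inv: "\<And>X Y (p::complex). p \<noteq> 0 \<Longrightarrow> X * p = Y \<Longrightarrow> X = Y * inverse p" by (simp add: field_simps)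
  have inv2: "\<And>X Y (p::complex). p \<noteq> 0 \<Longrightarrow> X * p * p = Y \<Longrightarrow> X = Y * (inverse p)^2"
    by (simp add: field_simps power2_eq_square)
  show "of_nat m1 * \<phi> \<tau>' (p1 * z1 + q1) (p2 * z2 + q2) * pd2 \<psi> \<tau>' (p1 * z1 + q1) (p2 * z2 + q2)
         - of_nat m2 * \<psi> \<tau>' (p1 * z1 + q1) (p2 * z2 + q2) * pd2 \<phi> \<tau>' (p1 * z1 + q1) (p2 * z2 + q2)
       = C1 * C2 * exp (of_nat m1 * (e0 + e1 * z1 + e2 * z2 + e12 * z1 * z2)) * exp (of_nat m2 * (e0 + e1 * z1 + e2 * z2 + e12 * z1 * z2))
          * inverse p2 * (of_nat m1 * \<phi> \<tau> z1 z2 * pd2 \<psi> \<tau> z1 z2 - of_nat m2 * \<psi> \<tau> z1 z2 * pd2 \<phi> \<tau> z1 z2)"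
    by (rule combo_i[OF T\<phi> T\<psi> inv[OF p2 A(1)] inv[OF p2 B(1)]])
  show "(of_nat m1 * \<phi> \<tau>' (p1 * z1 + q1) (p2 * z2 + q2) * pd1 \<psi> \<tau>' (p1 * z1 + q1) (p2 * z2 + q2)
          - of_nat m2 * \<psi> \<tau>' (p1 * z1 + q1) (p2 * z2 + q2) * pd1 \<phi> \<tau>' (p1 * z1 + q1) (p2 * z2 + q2))\<^sup>2
       + of_nat m1 * (\<phi> \<tau>' (p1 * z1 + q1) (p2 * z2 + q2))\<^sup>2 * ((pd1 \<psi> \<tau>' (p1 * z1 + q1) (p2 * z2 + q2))\<^sup>2
          - \<psi> \<tau>' (p1 * z1 + q1) (p2 * z2 + q2) * pd1 (pd1 \<psi>) \<tau>' (p1 * z1 + q1) (p2 * z2 + q2))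
       + of_nat m2 * (\<psi> \<tau>' (p1 * z1 + q1) (p2 * z2 + q2))\<^sup>2 * ((pd1 \<phi> \<tau>' (p1 * z1 + q1) (p2 * z2 + q2))\<^sup>2
          - \<phi> \<tau>' (p1 * z1 + q1) (p2 * z2 + q2) * pd1 (pd1 \<phi>) \<tau>' (p1 * z1 + q1) (p2 * z2 + q2))
       = (C1 * C2 * exp (of_nat m1 * (e0 + e1 * z1 + e2 * z2 + e12 * z1 * z2)) * exp (of_nat m2 * (e0 + e1 * z1 + e2 * z2 + e12 * z1 * z2))
          * inverse p1)\<^sup>2 *
         ((of_nat m1 * \<phi> \<tau> z1 z2 * pd1 \<psi> \<tau> z1 z2 - of_nat m2 * \<psi> \<tau> z1 z2 * pd1 \<phi> \<tau> z1 z2)\<^sup>2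
          + of_nat m1 * (\<phi> \<tau> z1 z2)\<^sup>2 * ((pd1 \<psi> \<tau> z1 z2)\<^sup>2 - \<psi> \<tau> z1 z2 * pd1 (pd1 \<psi>) \<tau> z1 z2)
          + of_nat m2 * (\<psi> \<tau> z1 z2)\<^sup>2 * ((pd1 \<phi> \<tau> z1 z2)\<^sup>2 - \<phi> \<tau> z1 z2 * pd1 (pd1 \<phi>) \<tau> z1 z2))"
    by (rule combo_ii[OF T\<phi> T\<psi> inv[OF p1 A(2)] inv[OF p1 B(2)] inv2[OF p1 A(3)] inv2[OF p1 B(3)]])
qed

lemma slash_T:
  fixes \<phi> :: "complex \<Rightarrow> complex \<Rightarrow> complex \<Rightarrow> complex" and a b c d :: int
  assumes S: "slash k m \<epsilon> a b c d \<phi> \<tau> z1 z2 = \<phi> \<tau> z1 z2" and e: "\<epsilon> \<noteq> 0" and J: "of_int c * \<tau> + of_int d \<noteq> 0"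
  shows "\<phi> ((of_int a * \<tau> + of_int b) / (of_int c * \<tau> + of_int d)) (\<epsilon> / (of_int c * \<tau> + of_int d) * z1 + 0)
            (cnj \<epsilon> / (of_int c * \<tau> + of_int d) * z2 + 0) =
     (\<epsilon>^k * (of_int c * \<tau> + of_int d)^k) * exp (of_nat m * (0 + 0 * z1 + 0 * z2 +
        (2 * of_real pi * \<i> * of_int c / (of_int c * \<tau> + of_int d)) * z1 * z2)) * \<phi> \<tau> z1 z2"
proof -
  define JJ where "JJ = of_int c * \<tau> + of_int d"
  define V where "V = \<phi> ((of_int a * \<tau> + of_int b) / JJ) (\<epsilon> * z1 / JJ) (cnj \<epsilon> * z2 / JJ)"
  define E where "E = exp (- 2 * complex_of_real pi * \<i> * of_nat m * of_int c * z1 * z2 / JJ)"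
  define x where "x = exp (of_nat m * (0 + 0 * z1 + 0 * z2 + (2 * of_real pi * \<i> * of_int c / JJ) * z1 * z2))"
  have JJ: "JJ \<noteq> 0" using J unfolding JJ_def .
  have xE: "x * E = 1" unfolding x_def E_def
    by (rule exp_cancel) (use JJ in \<open>simp add: field_simps\<close>)
  have S': "inverse (\<epsilon> ^ k) * inverse (JJ ^ k) * E * V = \<phi> \<tau> z1 z2"
    using S unfolding slash_def JJ_def[symmetric] V_def E_def .
  have "V = (\<epsilon>^k * JJ^k) * x * \<phi> \<tau> z1 z2"
  proof -
    have "(\<epsilon>^k * JJ^k) * x * \<phi> \<tau> z1 z2 = (\<epsilon>^k * JJ^k) * x * (inverse (\<epsilon> ^ k) * inverse (JJ ^ k) * E * V)"
      unfolding S' ..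
    also have "\<dots> = (x * E) * V" using e JJ by (simp add: field_simps)
    finally show ?thesis using xE by simp
  qed
  moreover have "\<epsilon> / JJ * z1 + 0 = \<epsilon> * z1 / JJ" "cnj \<epsilon> / JJ * z2 + 0 = cnj \<epsilon> * z2 / JJ" by simp_all
  ultimately show ?thesis unfolding JJ_def[symmetric] V_def x_def by simp
qed

lemma scal1:
  fixes \<epsilon> JJ :: complex
  assumes "\<epsilon> * cnj \<epsilon> = 1" "JJ \<noteq> 0"
  shows "inverse (\<epsilon> ^ (k1 + k2 + 1)) * inverse (JJ ^ (k1 + k2 + 1)) * ((\<epsilon>^k1 * JJ^k1) * (\<epsilon>^k2 * JJ^k2) * inverse (cnj \<epsilon> / JJ)) = 1"
proof -
  have e: "\<epsilon> \<noteq> 0" using assms(1) by auto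
  have c: "cnj \<epsilon> = inverse \<epsilon>" using assms(1) e by (simp add: field_simps)
  show ?thesis unfolding c using e assms(2) by (simp add: power_add field_simps)
qed

lemma scal2:
  fixes \<epsilon> JJ :: complex
  assumes "\<epsilon> ^ 4 = 1" "JJ \<noteq> 0"
  shows "inverse (\<epsilon> ^ (2 * (k1 + k2 + 1))) * inverse (JJ ^ (2 * (k1 + k2 + 1))) * ((\<epsilon>^k1 * JJ^k1) * (\<epsilon>^k2 * JJ^k2) * inverse (\<epsilon> / JJ))\<^sup>2 = 1"
proof -
  have e: "\<epsilon> \<noteq> 0" using assms(1) by auto
  have p2: "\<And>(x::complex) n. x ^ (2 * n) = (x ^ n)^2" by (simp add: power_mult[symmetric] mult.commute)
  have E: "\<epsilon> ^ (2 * (k1 + k2 + 1)) = (\<epsilon>^k1 * \<epsilon>^k2 * \<epsilon>)^2" unfolding p2 by (simp add: power_add mult_ac)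
  have J: "JJ ^ (2 * (k1 + k2 + 1)) = (JJ^k1 * JJ^k2 * JJ)^2" unfolding p2 by (simp add: power_add mult_ac)
  have q: "(\<epsilon>^k1 * JJ^k1) * (\<epsilon>^k2 * JJ^k2) * inverse (\<epsilon> / JJ) = (\<epsilon>^k1 * \<epsilon>^k2 * \<epsilon>) * (JJ^k1 * JJ^k2 * JJ) * inverse (\<epsilon>^2)"
    using e by (simp add: field_simps power2_eq_square)
  have e4: "inverse (\<epsilon>^2) ^ 2 = 1" using assms(1) by (simp add: power_inverse power_mult[symmetric] )
  show ?thesis unfolding E J q power_mult_distrib e4 using e assms(2) by (simp add: field_simps)
qed

definition NN :: "nat \<Rightarrow> nat \<Rightarrow> (complex \<Rightarrow> complex \<Rightarrow> complex \<Rightarrow> complex) \<Rightarrow> (complex \<Rightarrow> complex \<Rightarrow> complex \<Rightarrow> complex)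
   \<Rightarrow> complex \<Rightarrow> complex \<Rightarrow> complex \<Rightarrow> complex" where
  "NN m1 m2 \<phi> \<psi> = (\<lambda>\<tau> z1 z2. of_nat m1 * \<phi> \<tau> z1 z2 * pd2 \<psi> \<tau> z1 z2 - of_nat m2 * \<psi> \<tau> z1 z2 * pd2 \<phi> \<tau> z1 z2)"

definition QQ :: "nat \<Rightarrow> nat \<Rightarrow> (complex \<Rightarrow> complex \<Rightarrow> complex \<Rightarrow> complex) \<Rightarrow> (complex \<Rightarrow> complex \<Rightarrow> complex \<Rightarrow> complex)
   \<Rightarrow> complex \<Rightarrow> complex \<Rightarrow> complex \<Rightarrow> complex" where
  "QQ m1 m2 \<phi> \<psi> = (\<lambda>\<tau> z1 z2.
              (of_nat m1 * \<phi> \<tau> z1 z2 * pd1 \<psi> \<tau> z1 z2 - of_nat m2 * \<psi> \<tau> z1 z2 * pd1 \<phi> \<tau> z1 z2)\<^sup>2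
            + of_nat m1 * (\<phi> \<tau> z1 z2)\<^sup>2 * ((pd1 \<psi> \<tau> z1 z2)\<^sup>2 - \<psi> \<tau> z1 z2 * pd1 (pd1 \<psi>) \<tau> z1 z2)
            + of_nat m2 * (\<psi> \<tau> z1 z2)\<^sup>2 * ((pd1 \<phi> \<tau> z1 z2)\<^sup>2 - \<phi> \<tau> z1 z2 * pd1 (pd1 \<phi>) \<tau> z1 z2))"

definition dfacts :: "(complex \<Rightarrow> complex \<Rightarrow> complex \<Rightarrow> complex) \<Rightarrow> bool" where
  "dfacts \<phi> \<longleftrightarrow> (\<forall>t z1 z2. Im t > 0 \<longrightarrow>
      ((\<lambda>w. \<phi> t w z2) has_field_derivative pd1 \<phi> t z1 z2) (at z1)
    \<and> ((\<lambda>w. \<phi> t z1 w) has_field_derivative pd2 \<phi> t z1 z2) (at z2)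
    \<and> ((\<lambda>w. pd1 \<phi> t w z2) has_field_derivative pd1 (pd1 \<phi>) t z1 z2) (at z1))"

lemma dfacts_FE: "FE m \<phi> \<Longrightarrow> dfacts \<phi>"
  unfolding dfacts_def using FE_d1 FE_d2 FE_d1[OF FE_pd1] by blast

lemma slash_instance:
  fixes \<phi> \<psi> :: "complex \<Rightarrow> complex \<Rightarrow> complex \<Rightarrow> complex" and a b c d :: int
  assumes \<epsilon>: "\<epsilon> \<in> gauss_units" and det: "a * d - b * c = 1" and tau: "Im \<tau> > 0"
    and D\<phi>: "dfacts \<phi>" and D\<psi>: "dfacts \<psi>"
    and S\<phi>: "\<And>z1 z2. slash k1 m1 \<epsilon> a b c d \<phi> \<tau> z1 z2 = \<phi> \<tau> z1 z2"
    and S\<psi>: "\<And>z1 z2. slash k2 m2 \<epsilon> a b c d \<psi> \<tau> z1 z2 = \<psi> \<tau> z1 z2"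
  shows "slash (k1 + k2 + 1) (m1 + m2) \<epsilon> a b c d (NN m1 m2 \<phi> \<psi>) \<tau> z1 z2 = NN m1 m2 \<phi> \<psi> \<tau> z1 z2"
    and "slash (2 * (k1 + k2 + 1)) (2 * (m1 + m2)) \<epsilon> a b c d (QQ m1 m2 \<phi> \<psi>) \<tau> z1 z2 = QQ m1 m2 \<phi> \<psi> \<tau> z1 z2"
proof -
  define JJ where "JJ = of_int c * \<tau> + of_int d"
  define \<tau>' where "\<tau>' = (of_int a * \<tau> + of_int b) / JJ"
  have JJ: "JJ \<noteq> 0" unfolding JJ_def by (rule mobius(1)[OF det tau])
  have tau': "Im \<tau>' > 0" unfolding \<tau>'_def JJ_def by (rule mobius(2)[OF det tau])
  note uf = unit_facts[OF \<epsilon>]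
  define e12 where "e12 = 2 * of_real pi * \<i> * of_int c / JJ"
  have T\<phi>: "\<phi> \<tau>' (\<epsilon> / JJ * z1 + 0) (cnj \<epsilon> / JJ * z2 + 0) = (\<epsilon>^k1 * JJ^k1) * exp (of_nat m1 * (0 + 0 * z1 + 0 * z2 + e12 * z1 * z2)) * \<phi> \<tau> z1 z2" for z1 z2
    unfolding \<tau>'_def JJ_def e12_def by (rule slash_T[OF S\<phi> uf(1) mobius(1)[OF det tau]])
  have T\<psi>: "\<psi> \<tau>' (\<epsilon> / JJ * z1 + 0) (cnj \<epsilon> / JJ * z2 + 0) = (\<epsilon>^k2 * JJ^k2) * exp (of_nat m2 * (0 + 0 * z1 + 0 * z2 + e12 * z1 * z2)) * \<psi> \<tau> z1 z2" for z1 z2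
    unfolding \<tau>'_def JJ_def e12_def by (rule slash_T[OF S\<psi> uf(1) mobius(1)[OF det tau]])
  have tt: "t \<in> {\<tau>, \<tau>'} \<Longrightarrow> Im t > 0" for t using tau tau' by auto
  note TC = trans_combo[where \<tau>=\<tau> and \<tau>'=\<tau>' and \<phi>=\<phi> and \<psi>=\<psi>,
      OF _ _ _ _ _ _ T\<phi> T\<psi>, of z1 z2]
  have p1: "\<epsilon> / JJ \<noteq> 0" and p2: "cnj \<epsilon> / JJ \<noteq> 0" using uf JJ by auto
  note TC' = TC[OF _ _ _ _ _ _ p1 p2]
  have TCN: "NN m1 m2 \<phi> \<psi> \<tau>' (\<epsilon> / JJ * z1 + 0) (cnj \<epsilon> / JJ * z2 + 0) =
      (\<epsilon>^k1 * JJ^k1) * (\<epsilon>^k2 * JJ^k2) * exp (of_nat m1 * (0 + 0 * z1 + 0 * z2 + e12 * z1 * z2)) * exp (of_nat m2 * (0 + 0 * z1 + 0 * z2 + e12 * z1 * z2))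
          * inverse (cnj \<epsilon> / JJ) * NN m1 m2 \<phi> \<psi> \<tau> z1 z2"
    unfolding NN_def by (rule TC'(1)) (use D\<phi> D\<psi> tt in \<open>auto simp: dfacts_def\<close>)
  have TCQ: "QQ m1 m2 \<phi> \<psi> \<tau>' (\<epsilon> / JJ * z1 + 0) (cnj \<epsilon> / JJ * z2 + 0) =
      ((\<epsilon>^k1 * JJ^k1) * (\<epsilon>^k2 * JJ^k2) * exp (of_nat m1 * (0 + 0 * z1 + 0 * z2 + e12 * z1 * z2)) * exp (of_nat m2 * (0 + 0 * z1 + 0 * z2 + e12 * z1 * z2))
          * inverse (\<epsilon> / JJ))\<^sup>2 * QQ m1 m2 \<phi> \<psi> \<tau> z1 z2"
    unfolding QQ_def by (rule TC'(2)) (use D\<phi> D\<psi> tt in \<open>auto simp: dfacts_def\<close>)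
  have args: "\<epsilon> * z1 / JJ = \<epsilon> / JJ * z1 + 0" "cnj \<epsilon> * z2 / JJ = cnj \<epsilon> / JJ * z2 + 0" by simp_all
  define x1 where "x1 = exp (of_nat m1 * (0 + 0 * z1 + 0 * z2 + e12 * z1 * z2))"
  define x2 where "x2 = exp (of_nat m2 * (0 + 0 * z1 + 0 * z2 + e12 * z1 * z2))"
  have x12: "x1 * x2 = exp (of_nat (m1 + m2) * (e12 * z1 * z2))"
    unfolding x1_def x2_def by (simp add: exp_add[symmetric] algebra_simps)
  have xN: "exp (- 2 * complex_of_real pi * \<i> * of_nat (m1 + m2) * of_int c * z1 * z2 / JJ) * (x1 * x2) = 1"
    unfolding x12 by (rule exp_cancel) (use JJ in \<open>simp add: e12_def field_simps\<close>)
  have xQ: "exp (- 2 * complex_of_real pi * \<i> * of_nat (2 * (m1 + m2)) * of_int c * z1 * z2 / JJ) * (x1 * x2)^2 = 1"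
  proof -
    have "- 2 * complex_of_real pi * \<i> * of_nat (2 * (m1 + m2)) * of_int c * z1 * z2 / JJ
        + (of_nat (m1 + m2) * (e12 * z1 * z2) + of_nat (m1 + m2) * (e12 * z1 * z2)) = 0"
      using JJ by (simp add: e12_def field_simps)
    then show ?thesis unfolding power2_eq_square x12 exp_add[symmetric] by simp
  qed
  have "slash (k1 + k2 + 1) (m1 + m2) \<epsilon> a b c d (NN m1 m2 \<phi> \<psi>) \<tau> z1 z2
      = inverse (\<epsilon> ^ (k1 + k2 + 1)) * inverse (JJ ^ (k1 + k2 + 1))
        * exp (- 2 * complex_of_real pi * \<i> * of_nat (m1 + m2) * of_int c * z1 * z2 / JJ)
        * NN m1 m2 \<phi> \<psi> \<tau>' (\<epsilon> / JJ * z1 + 0) (cnj \<epsilon> / JJ * z2 + 0)"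
    unfolding slash_def JJ_def[symmetric] \<tau>'_def[symmetric] args ..
  also have "\<dots> = (inverse (\<epsilon> ^ (k1 + k2 + 1)) * inverse (JJ ^ (k1 + k2 + 1)) * ((\<epsilon>^k1 * JJ^k1) * (\<epsilon>^k2 * JJ^k2) * inverse (cnj \<epsilon> / JJ)))
        * (exp (- 2 * complex_of_real pi * \<i> * of_nat (m1 + m2) * of_int c * z1 * z2 / JJ) * (x1 * x2)) * NN m1 m2 \<phi> \<psi> \<tau> z1 z2"
    unfolding TCN x1_def[symmetric] x2_def[symmetric] by (simp only: mult_ac)
  also have "\<dots> = NN m1 m2 \<phi> \<psi> \<tau> z1 z2" unfolding xN scal1[OF uf(2) JJ] by simp
  finally show "slash (k1 + k2 + 1) (m1 + m2) \<epsilon> a b c d (NN m1 m2 \<phi> \<psi>) \<tau> z1 z2 = NN m1 m2 \<phi> \<psi> \<tau> z1 z2" .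
  have "slash (2 * (k1 + k2 + 1)) (2 * (m1 + m2)) \<epsilon> a b c d (QQ m1 m2 \<phi> \<psi>) \<tau> z1 z2
      = inverse (\<epsilon> ^ (2 * (k1 + k2 + 1))) * inverse (JJ ^ (2 * (k1 + k2 + 1)))
        * exp (- 2 * complex_of_real pi * \<i> * of_nat (2 * (m1 + m2)) * of_int c * z1 * z2 / JJ)
        * QQ m1 m2 \<phi> \<psi> \<tau>' (\<epsilon> / JJ * z1 + 0) (cnj \<epsilon> / JJ * z2 + 0)"
    unfolding slash_def JJ_def[symmetric] \<tau>'_def[symmetric] args ..
  also have "\<dots> = (inverse (\<epsilon> ^ (2 * (k1 + k2 + 1))) * inverse (JJ ^ (2 * (k1 + k2 + 1))) * ((\<epsilon>^k1 * JJ^k1) * (\<epsilon>^k2 * JJ^k2) * inverse (\<epsilon> / JJ))\<^sup>2)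
        * (exp (- 2 * complex_of_real pi * \<i> * of_nat (2 * (m1 + m2)) * of_int c * z1 * z2 / JJ) * (x1 * x2)^2) * QQ m1 m2 \<phi> \<psi> \<tau> z1 z2"
    unfolding TCQ x1_def[symmetric] x2_def[symmetric] power_mult_distrib by (simp only: mult_ac)
  also have "\<dots> = QQ m1 m2 \<phi> \<psi> \<tau> z1 z2" unfolding xQ scal2[OF uf(3) JJ] by simp
  finally show "slash (2 * (k1 + k2 + 1)) (2 * (m1 + m2)) \<epsilon> a b c d (QQ m1 m2 \<phi> \<psi>) \<tau> z1 z2 = QQ m1 m2 \<phi> \<psi> \<tau> z1 z2" .
qed

lemma heis_T:
  fixes \<phi> :: "complex \<Rightarrow> complex \<Rightarrow> complex \<Rightarrow> complex"
  assumes H: "heis m l \<mu> \<phi> \<tau> z1 z2 = \<phi> \<tau> z1 z2"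
  shows "\<phi> \<tau> (1 * z1 + (l * \<tau> + \<mu>)) (1 * z2 + (cnj l * \<tau> + cnj \<mu>)) =
     1 * exp (of_nat m * ((- (2 * of_real pi * \<i> * normK l * \<tau>)) + (- (2 * of_real pi * \<i> * cnj l)) * z1
        + (- (2 * of_real pi * \<i> * l)) * z2 + 0 * z1 * z2)) * \<phi> \<tau> z1 z2"
proof -
  define V where "V = \<phi> \<tau> (z1 + l * \<tau> + \<mu>) (z2 + cnj l * \<tau> + cnj \<mu>)"
  define E where "E = exp (2 * complex_of_real pi * \<i> * of_nat m * (normK l * \<tau> + cnj l * z1 + l * z2))"
  define x where "x = exp (of_nat m * ((- (2 * of_real pi * \<i> * normK l * \<tau>)) + (- (2 * of_real pi * \<i> * cnj l)) * z1
        + (- (2 * of_real pi * \<i> * l)) * z2 + 0 * z1 * z2))"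
  have xE: "x * E = 1" unfolding x_def E_def by (rule exp_cancel) (simp add: algebra_simps)
  have H': "E * V = \<phi> \<tau> z1 z2" using H unfolding heis_def V_def E_def .
  have "V = x * \<phi> \<tau> z1 z2"
  proof -
    have "x * \<phi> \<tau> z1 z2 = x * (E * V)" unfolding H' ..
    also have "\<dots> = (x * E) * V" by (simp only: mult.assoc)
    finally show ?thesis using xE by simp
  qed
  moreover have "1 * z1 + (l * \<tau> + \<mu>) = z1 + l * \<tau> + \<mu>" "1 * z2 + (cnj l * \<tau> + cnj \<mu>) = z2 + cnj l * \<tau> + cnj \<mu>"
    by (simp_all add: add.assoc)
  ultimately show ?thesis unfolding V_def x_def by (simp add: add.assoc)
qed

lemma heis_instance:
  fixes \<phi> \<psi> :: "complex \<Rightarrow> complex \<Rightarrow> complex \<Rightarrow> complex"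
  assumes tau: "Im \<tau> > 0"
    and D\<phi>: "dfacts \<phi>" and D\<psi>: "dfacts \<psi>"
    and H\<phi>: "\<And>z1 z2. heis m1 l \<mu> \<phi> \<tau> z1 z2 = \<phi> \<tau> z1 z2"
    and H\<psi>: "\<And>z1 z2. heis m2 l \<mu> \<psi> \<tau> z1 z2 = \<psi> \<tau> z1 z2"
  shows "heis (m1 + m2) l \<mu> (NN m1 m2 \<phi> \<psi>) \<tau> z1 z2 = NN m1 m2 \<phi> \<psi> \<tau> z1 z2"
    and "heis (2 * (m1 + m2)) l \<mu> (QQ m1 m2 \<phi> \<psi>) \<tau> z1 z2 = QQ m1 m2 \<phi> \<psi> \<tau> z1 z2"
proof -
  define e0 where "e0 = - (2 * of_real pi * \<i> * normK l * \<tau>)"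
  define e1 where "e1 = - (2 * of_real pi * \<i> * cnj l)"
  define e2 where "e2 = - (2 * of_real pi * \<i> * l)"
  have T\<phi>: "\<phi> \<tau> (1 * z1 + (l * \<tau> + \<mu>)) (1 * z2 + (cnj l * \<tau> + cnj \<mu>)) = 1 * exp (of_nat m1 * (e0 + e1 * z1 + e2 * z2 + 0 * z1 * z2)) * \<phi> \<tau> z1 z2" for z1 z2
    unfolding e0_def e1_def e2_def by (rule heis_T[OF H\<phi>])
  have T\<psi>: "\<psi> \<tau> (1 * z1 + (l * \<tau> + \<mu>)) (1 * z2 + (cnj l * \<tau> + cnj \<mu>)) = 1 * exp (of_nat m2 * (e0 + e1 * z1 + e2 * z2 + 0 * z1 * z2)) * \<psi> \<tau> z1 z2" for z1 z2
    unfolding e0_def e1_def e2_def by (rule heis_T[OF H\<psi>])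
  have tt: "t \<in> {\<tau>, \<tau>} \<Longrightarrow> Im t > 0" for t using tau by auto
  note TC = trans_combo[where \<tau>=\<tau> and \<tau>'=\<tau> and \<phi>=\<phi> and \<psi>=\<psi>, OF _ _ _ _ _ _ T\<phi> T\<psi>, of z1 z2]
  have p: "(1::complex) \<noteq> 0" by simp
  note TC' = TC[OF _ _ _ _ _ _ p p]
  define x1 where "x1 = exp (of_nat m1 * (e0 + e1 * z1 + e2 * z2 + 0 * z1 * z2))"
  define x2 where "x2 = exp (of_nat m2 * (e0 + e1 * z1 + e2 * z2 + 0 * z1 * z2))"
  have TCN: "NN m1 m2 \<phi> \<psi> \<tau> (1 * z1 + (l * \<tau> + \<mu>)) (1 * z2 + (cnj l * \<tau> + cnj \<mu>)) = 1 * 1 * x1 * x2 * inverse 1 * NN m1 m2 \<phi> \<psi> \<tau> z1 z2"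
    unfolding NN_def x1_def x2_def by (rule TC'(1)) (use D\<phi> D\<psi> tt in \<open>auto simp: dfacts_def\<close>)
  have TCQ: "QQ m1 m2 \<phi> \<psi> \<tau> (1 * z1 + (l * \<tau> + \<mu>)) (1 * z2 + (cnj l * \<tau> + cnj \<mu>)) = (1 * 1 * x1 * x2 * inverse 1)\<^sup>2 * QQ m1 m2 \<phi> \<psi> \<tau> z1 z2"
    unfolding QQ_def x1_def x2_def by (rule TC'(2)) (use D\<phi> D\<psi> tt in \<open>auto simp: dfacts_def\<close>)
  have args: "z1 + l * \<tau> + \<mu> = 1 * z1 + (l * \<tau> + \<mu>)" "z2 + cnj l * \<tau> + cnj \<mu> = 1 * z2 + (cnj l * \<tau> + cnj \<mu>)"
    by (simp_all add: add.assoc)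
  have x12: "x1 * x2 = exp (of_nat (m1 + m2) * (e0 + e1 * z1 + e2 * z2))"
    unfolding x1_def x2_def by (simp add: exp_add[symmetric] algebra_simps)
  have xN: "exp (2 * complex_of_real pi * \<i> * of_nat (m1 + m2) * (normK l * \<tau> + cnj l * z1 + l * z2)) * (x1 * x2) = 1"
    unfolding x12 by (rule exp_cancel) (simp add: e0_def e1_def e2_def algebra_simps)
  have xQ: "exp (2 * complex_of_real pi * \<i> * of_nat (2 * (m1 + m2)) * (normK l * \<tau> + cnj l * z1 + l * z2)) * (x1 * x2)\<^sup>2 = 1"
  proof -
    have "2 * complex_of_real pi * \<i> * of_nat (2 * (m1 + m2)) * (normK l * \<tau> + cnj l * z1 + l * z2)
        + (of_nat (m1 + m2) * (e0 + e1 * z1 + e2 * z2) + of_nat (m1 + m2) * (e0 + e1 * z1 + e2 * z2)) = 0"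
      by (simp add: e0_def e1_def e2_def algebra_simps)
    then show ?thesis unfolding power2_eq_square x12 exp_add[symmetric] by simp
  qed
  have "heis (m1 + m2) l \<mu> (NN m1 m2 \<phi> \<psi>) \<tau> z1 z2
      = exp (2 * complex_of_real pi * \<i> * of_nat (m1 + m2) * (normK l * \<tau> + cnj l * z1 + l * z2)) *
        NN m1 m2 \<phi> \<psi> \<tau> (1 * z1 + (l * \<tau> + \<mu>)) (1 * z2 + (cnj l * \<tau> + cnj \<mu>))"
    unfolding heis_def args ..
  also have "\<dots> = (exp (2 * complex_of_real pi * \<i> * of_nat (m1 + m2) * (normK l * \<tau> + cnj l * z1 + l * z2)) * (x1 * x2)) * NN m1 m2 \<phi> \<psi> \<tau> z1 z2"
    unfolding TCN by simp
  also have "\<dots> = NN m1 m2 \<phi> \<psi> \<tau> z1 z2" unfolding xN by simp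
  finally show "heis (m1 + m2) l \<mu> (NN m1 m2 \<phi> \<psi>) \<tau> z1 z2 = NN m1 m2 \<phi> \<psi> \<tau> z1 z2" .
  have "heis (2 * (m1 + m2)) l \<mu> (QQ m1 m2 \<phi> \<psi>) \<tau> z1 z2
      = exp (2 * complex_of_real pi * \<i> * of_nat (2 * (m1 + m2)) * (normK l * \<tau> + cnj l * z1 + l * z2)) *
        QQ m1 m2 \<phi> \<psi> \<tau> (1 * z1 + (l * \<tau> + \<mu>)) (1 * z2 + (cnj l * \<tau> + cnj \<mu>))"
    unfolding heis_def args ..
  also have "\<dots> = (exp (2 * complex_of_real pi * \<i> * of_nat (2 * (m1 + m2)) * (normK l * \<tau> + cnj l * z1 + l * z2)) * (x1 * x2)\<^sup>2) * QQ m1 m2 \<phi> \<psi> \<tau> z1 z2"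
    unfolding TCQ by simp
  also have "\<dots> = QQ m1 m2 \<phi> \<psi> \<tau> z1 z2" unfolding xQ by simp
  finally show "heis (2 * (m1 + m2)) l \<mu> (QQ m1 m2 \<phi> \<psi>) \<tau> z1 z2 = QQ m1 m2 \<phi> \<psi> \<tau> z1 z2" .
qed

lemma HJF_FE: "HJF k m \<phi> \<Longrightarrow> FE m \<phi>"
  unfolding HJF_def FE_def fterm_def Idx_def by blast

lemma HJF_slash: "HJF k m \<phi> \<Longrightarrow> \<epsilon> \<in> gauss_units \<Longrightarrow> a * d - b * c = 1 \<Longrightarrow> Im \<tau> > 0 \<Longrightarrow>
    slash k m \<epsilon> a b c d \<phi> \<tau> z1 z2 = \<phi> \<tau> z1 z2"
  unfolding HJF_def by blast

lemma HJF_heis: "HJF k m \<phi> \<Longrightarrow> l \<in> gauss_ints \<Longrightarrow> \<mu> \<in> gauss_ints \<Longrightarrow> Im \<tau> > 0 \<Longrightarrow>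
    heis m l \<mu> \<phi> \<tau> z1 z2 = \<phi> \<tau> z1 z2"
  unfolding HJF_def by blast

lemma HJF_intro:
  assumes "FE m f"
    and "\<And>\<epsilon> a b c d \<tau> z1 z2. \<epsilon> \<in> gauss_units \<Longrightarrow> a * d - b * c = 1 \<Longrightarrow> Im \<tau> > 0 \<Longrightarrow>
          slash k m \<epsilon> a b c d f \<tau> z1 z2 = f \<tau> z1 z2"
    and "\<And>l \<mu> \<tau> z1 z2. l \<in> gauss_ints \<Longrightarrow> \<mu> \<in> gauss_ints \<Longrightarrow> Im \<tau> > 0 \<Longrightarrow>
          heis m l \<mu> f \<tau> z1 z2 = f \<tau> z1 z2"
  shows "HJF k m f"
proof -
  have "holo3 f" by (rule FE_holo3[OF assms(1)])
  moreover have "\<exists>cf :: nat \<Rightarrow> complex \<Rightarrow> complex. \<forall>\<tau> z1 z2. Im \<tau> > 0 \<longrightarrow>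
        ((\<lambda>(n, r). cf n r * ee (of_nat n * \<tau> + r * z1 + cnj r * z2)) has_sum f \<tau> z1 z2)
          {(n, r). r \<in> gauss_dual \<and> (cmod r)\<^sup>2 \<le> real (n * m)}"
    using assms(1) unfolding FE_def fterm_def Idx_def .
  ultimately show ?thesis unfolding HJF_def using assms(2,3) by blast
qed

lemma FE_NN: "FE m1 \<phi> \<Longrightarrow> FE m2 \<psi> \<Longrightarrow> FE (m1 + m2) (NN m1 m2 \<phi> \<psi>)"
proof -
  assume F1: "FE m1 \<phi>" and F2: "FE m2 \<psi>"
  have A: "FE (m1 + m2) (\<lambda>t x y. (\<lambda>t x y. of_nat m1 * \<phi> t x y) t x y * pd2 \<psi> t x y)"
    by (rule FE_mult[OF FE_cmult[OF F1] FE_pd2[OF F2]])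
  have B: "FE (m2 + m1) (\<lambda>t x y. (\<lambda>t x y. of_nat m2 * \<psi> t x y) t x y * pd2 \<phi> t x y)"
    by (rule FE_mult[OF FE_cmult[OF F2] FE_pd2[OF F1]])
  have "FE (m1 + m2) (\<lambda>t x y. (\<lambda>t x y. (\<lambda>t x y. of_nat m1 * \<phi> t x y) t x y * pd2 \<psi> t x y) t x y
        - (\<lambda>t x y. (\<lambda>t x y. of_nat m2 * \<psi> t x y) t x y * pd2 \<phi> t x y) t x y)"
    by (rule FE_diff[OF A FE_idx[OF B]]) simp
  then show ?thesis by (rule FE_cong) (simp add: NN_def)
qed

lemma FE_QQ: "FE m1 \<phi> \<Longrightarrow> FE m2 \<psi> \<Longrightarrow> FE (2 * (m1 + m2)) (QQ m1 m2 \<phi> \<psi>)"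
proof -
  assume F1: "FE m1 \<phi>" and F2: "FE m2 \<psi>"
  define A where "A = (\<lambda>t x y. of_nat m1 * \<phi> t x y * pd1 \<psi> t x y - of_nat m2 * \<psi> t x y * pd1 \<phi> t x y)"
  have FA: "FE (m1 + m2) A"
  proof -
    have a: "FE (m1 + m2) (\<lambda>t x y. (\<lambda>t x y. of_nat m1 * \<phi> t x y) t x y * pd1 \<psi> t x y)"
      by (rule FE_mult[OF FE_cmult[OF F1] FE_pd1[OF F2]])
    have b: "FE (m2 + m1) (\<lambda>t x y. (\<lambda>t x y. of_nat m2 * \<psi> t x y) t x y * pd1 \<phi> t x y)"
      by (rule FE_mult[OF FE_cmult[OF F2] FE_pd1[OF F1]])
    show ?thesis
      by (rule FE_cong[OF FE_diff[OF a FE_idx[OF b]]]) (simp_all add: A_def)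
  qed
  have FAA: "FE (2 * (m1 + m2)) (\<lambda>t x y. A t x y * A t x y)"
    by (rule FE_idx[OF FE_mult[OF FA FA]]) simp
  define R1 where "R1 = (\<lambda>t x y. pd1 \<psi> t x y * pd1 \<psi> t x y - \<psi> t x y * pd1 (pd1 \<psi>) t x y)"
  have FR1: "FE (m2 + m2) R1" unfolding R1_def
    by (rule FE_diff[OF FE_mult[OF FE_pd1[OF F2] FE_pd1[OF F2]] FE_mult[OF F2 FE_pd1[OF FE_pd1[OF F2]]]])
  define R2 where "R2 = (\<lambda>t x y. pd1 \<phi> t x y * pd1 \<phi> t x y - \<phi> t x y * pd1 (pd1 \<phi>) t x y)"
  have FR2: "FE (m1 + m1) R2" unfolding R2_def
    by (rule FE_diff[OF FE_mult[OF FE_pd1[OF F1] FE_pd1[OF F1]] FE_mult[OF F1 FE_pd1[OF FE_pd1[OF F1]]]])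
  have FB: "FE (2 * (m1 + m2)) (\<lambda>t x y. (\<lambda>t x y. of_nat m1 * (\<phi> t x y * \<phi> t x y)) t x y * R1 t x y)"
    by (rule FE_idx[OF FE_mult[OF FE_cmult[OF FE_mult[OF F1 F1]] FR1]]) simp
  have FC: "FE (2 * (m1 + m2)) (\<lambda>t x y. (\<lambda>t x y. of_nat m2 * (\<psi> t x y * \<psi> t x y)) t x y * R2 t x y)"
    by (rule FE_idx[OF FE_mult[OF FE_cmult[OF FE_mult[OF F2 F2]] FR2]]) simp
  have "FE (2 * (m1 + m2)) (\<lambda>t x y. (\<lambda>t x y. A t x y * A t x y + (\<lambda>t x y. of_nat m1 * (\<phi> t x y * \<phi> t x y)) t x y * R1 t x y) t x y
        + (\<lambda>t x y. of_nat m2 * (\<psi> t x y * \<psi> t x y)) t x y * R2 t x y)"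
    by (rule FE_add[OF FE_add[OF FAA FB] FC])
  then show ?thesis
    by (rule FE_cong) (simp add: QQ_def A_def R1_def R2_def power2_eq_square mult.assoc)
qed

theorem proposition4p8:
  fixes \<phi> \<psi> :: "complex \<Rightarrow> complex \<Rightarrow> complex \<Rightarrow> complex" and k1 k2 m1 m2 :: nat
  assumes "k1 > 0" "m1 > 0" "k2 > 0" "m2 > 0"
    and "HJF k1 m1 \<phi>" and "HJF k2 m2 \<psi>"
  shows "HJF (k1 + k2 + 1) (m1 + m2)
           (\<lambda>\<tau> z1 z2. of_nat m1 * \<phi> \<tau> z1 z2 * pd2 \<psi> \<tau> z1 z2
                     - of_nat m2 * \<psi> \<tau> z1 z2 * pd2 \<phi> \<tau> z1 z2)
       \<and> HJF (2 * (k1 + k2 + 1)) (2 * (m1 + m2))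
           (\<lambda>\<tau> z1 z2.
              (of_nat m1 * \<phi> \<tau> z1 z2 * pd1 \<psi> \<tau> z1 z2 - of_nat m2 * \<psi> \<tau> z1 z2 * pd1 \<phi> \<tau> z1 z2)\<^sup>2
            + of_nat m1 * (\<phi> \<tau> z1 z2)\<^sup>2 * ((pd1 \<psi> \<tau> z1 z2)\<^sup>2 - \<psi> \<tau> z1 z2 * pd1 (pd1 \<psi>) \<tau> z1 z2)
            + of_nat m2 * (\<psi> \<tau> z1 z2)\<^sup>2 * ((pd1 \<phi> \<tau> z1 z2)\<^sup>2 - \<phi> \<tau> z1 z2 * pd1 (pd1 \<phi>) \<tau> z1 z2))"
proof -
  have F1: "FE m1 \<phi>" by (rule HJF_FE[OF assms(5)])
  have F2: "FE m2 \<psi>" by (rule HJF_FE[OF assms(6)])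
  have D1: "dfacts \<phi>" by (rule dfacts_FE[OF F1])
  have D2: "dfacts \<psi>" by (rule dfacts_FE[OF F2])
  have "HJF (k1 + k2 + 1) (m1 + m2) (NN m1 m2 \<phi> \<psi>)"
  proof (rule HJF_intro[OF FE_NN[OF F1 F2]])
    fix \<epsilon> a b c d \<tau> z1 z2 assume "\<epsilon> \<in> gauss_units" "a * d - b * c = (1::int)" "Im \<tau> > 0"
    then show "slash (k1 + k2 + 1) (m1 + m2) \<epsilon> a b c d (NN m1 m2 \<phi> \<psi>) \<tau> z1 z2 = NN m1 m2 \<phi> \<psi> \<tau> z1 z2"
      using slash_instance(1)[OF _ _ _ D1 D2 HJF_slash[OF assms(5)] HJF_slash[OF assms(6)]] by blast
  next
    fix l \<mu> \<tau> z1 z2 assume "l \<in> gauss_ints" "\<mu> \<in> gauss_ints" "Im \<tau> > 0"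
    then show "heis (m1 + m2) l \<mu> (NN m1 m2 \<phi> \<psi>) \<tau> z1 z2 = NN m1 m2 \<phi> \<psi> \<tau> z1 z2"
      using heis_instance(1)[OF _ D1 D2 HJF_heis[OF assms(5)] HJF_heis[OF assms(6)]] by blast
  qed
  moreover have "HJF (2 * (k1 + k2 + 1)) (2 * (m1 + m2)) (QQ m1 m2 \<phi> \<psi>)"
  proof (rule HJF_intro[OF FE_QQ[OF F1 F2]])
    fix \<epsilon> a b c d \<tau> z1 z2 assume "\<epsilon> \<in> gauss_units" "a * d - b * c = (1::int)" "Im \<tau> > 0"
    then show "slash (2 * (k1 + k2 + 1)) (2 * (m1 + m2)) \<epsilon> a b c d (QQ m1 m2 \<phi> \<psi>) \<tau> z1 z2 = QQ m1 m2 \<phi> \<psi> \<tau> z1 z2"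
      using slash_instance(2)[OF _ _ _ D1 D2 HJF_slash[OF assms(5)] HJF_slash[OF assms(6)]] by blast
  next
    fix l \<mu> \<tau> z1 z2 assume "l \<in> gauss_ints" "\<mu> \<in> gauss_ints" "Im \<tau> > 0"
    then show "heis (2 * (m1 + m2)) l \<mu> (QQ m1 m2 \<phi> \<psi>) \<tau> z1 z2 = QQ m1 m2 \<phi> \<psi> \<tau> z1 z2"
      using heis_instance(2)[OF _ D1 D2 HJF_heis[OF assms(5)] HJF_heis[OF assms(6)]] by blast
  qed
  ultimately show ?thesis unfolding NN_def QQ_def by blast
qed

end
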